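(* Let $\phi$ be a faithful normal state on a von Neumann algebra $\mathcal{M}$, identified with $\pi_\phi(\mathcal{M})$ acting on the GNS space $\mathcal{H}_\phi$ with cyclic and separating unit vector $\zeta_\phi$, $\phi(x)=\langle\zeta_\phi,x\zeta_\phi\rangle$. Let $\tau\in P^{1/2}_\phi(\mathcal{M})$. Then there exists a positive map $\tau':\mathcal{M}'\to\mathcal{M}'$ such that $$\langle\tau'(y')\zeta_\phi,x\zeta_\phi\rangle=\langle y'\zeta_\phi,\tau(x)\zeta_\phi\rangle\quad\text{for all }x\in\mathcal{M},\ y'\in\mathcal{M}',$$ and $\tau'\in P^{1/2}_\phi(\mathcal{M}')$. Further, for two such maps $\tau_1,\tau_2\in P^{1/2}_\phi(\mathcal{M})$ with corresponding $\tau_1',\tau_2'$, for all $x\in\mathcal{M}$ and $y_1',y_2'\in\mathcal{M}'$, $$|\psi_{y_1',y_2'}(\tau_1(x)-\tau_2(x))|\le\|(\tau_1'-\tau_2')((y_2')^*y_1')\zeta_\phi\|\,\|x\zeta_\phi\|\le\|(\tau_1'-\tau_2')((y_2')^*y_1')\zeta_\phi\|\,\|x\|,$$ where $\psi_{y_1',y_2'}(x)=\langle y_1'\zeta_\phi,xy_2'\zeta_\phi\rangle$.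
   Context: $\mathcal{M}'$ is the commutant of $\mathcal{M}$ in $\mathcal{B}(\mathcal{H}_\phi)$. For $\mathcal{A}\in\{\mathcal{M},\mathcal{M}'\}$, write $\phi(a)=\langle\zeta_\phi,a\zeta_\phi\rangle$ for $a\in\mathcal{A}$; $P^{1/2}_\phi(\mathcal{A})$ denotes the set of positive maps $\tau:\mathcal{A}\to\mathcal{A}$ with $\phi(\tau(a))\le\phi(a)$ for $a\ge0$, $\tau(1)\le1$, and $\phi(\tau(a)^*\tau(a))\le\phi(a^*a)$ for all $a\in\mathcal{A}$. *)

theory Defs
  imports "HOL-Analysis.Analysis"
begin

text \<open>A complex Hilbert space: a complete real inner product space with a complex
scalar multiplication extending the real one, and a complex inner product
(conjugate-linear in the first, linear in the second argument) whose real part is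
the real inner product (so that the norm is the Hilbert space norm).\<close>

class complex_hilbert = real_inner + complete_space +
  fixes scaleC :: "complex \<Rightarrow> 'a \<Rightarrow> 'a"
    and cinner :: "'a \<Rightarrow> 'a \<Rightarrow> complex"
  assumes scaleC_add_right: "scaleC c (x + y) = scaleC c x + scaleC c y"
    and scaleC_add_left: "scaleC (c + d) x = scaleC c x + scaleC d x"
    and scaleC_scaleC: "scaleC c (scaleC d x) = scaleC (c * d) x"
    and scaleC_of_real: "scaleC (complex_of_real r) x = scaleR r x"
    and cinner_commute: "cinner y x = cnj (cinner x y)"
    and cinner_add_right: "cinner x (y + z) = cinner x y + cinner x z"
    and cinner_scaleC_right: "cinner x (scaleC c y) = c * cinner x y"
    and Re_cinner: "Re (cinner x y) = inner x y"

definition bounded_op :: "('h::complex_hilbert \<Rightarrow> 'h) \<Rightarrow> bool" where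
  "bounded_op A \<longleftrightarrow> (\<forall>x y. A (x + y) = A x + A y) \<and> (\<forall>c x. A (scaleC c x) = scaleC c (A x))
     \<and> (\<exists>K. \<forall>x. norm (A x) \<le> K * norm x)"

definition adj :: "('h::complex_hilbert \<Rightarrow> 'h) \<Rightarrow> ('h \<Rightarrow> 'h)" where
  "adj A = (SOME B. \<forall>x y. cinner (A x) y = cinner x (B y))"

definition commutant :: "('h::complex_hilbert \<Rightarrow> 'h) set \<Rightarrow> ('h \<Rightarrow> 'h) set" where
  "commutant S = {B. bounded_op B \<and> (\<forall>A\<in>S. A \<circ> B = B \<circ> A)}"

text \<open>A von Neumann algebra: a self-adjoint set of bounded operators equal to its
bicommutant (equivalently a unital weakly closed *-subalgebra of B(H)).\<close>
definition von_neumann_algebra :: "('h::complex_hilbert \<Rightarrow> 'h) set \<Rightarrow> bool" where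
  "von_neumann_algebra M \<longleftrightarrow> (\<forall>A\<in>M. bounded_op A) \<and> (\<forall>A\<in>M. adj A \<in> M)
     \<and> commutant (commutant M) = M"

definition pos_op :: "('h::complex_hilbert \<Rightarrow> 'h) \<Rightarrow> bool" where
  "pos_op a \<longleftrightarrow> bounded_op a \<and> (\<forall>v. Im (cinner v (a v)) = 0 \<and> Re (cinner v (a v)) \<ge> 0)"

definition op_le :: "('h::complex_hilbert \<Rightarrow> 'h) \<Rightarrow> ('h \<Rightarrow> 'h) \<Rightarrow> bool" where
  "op_le a b \<longleftrightarrow> pos_op (\<lambda>v. b v - a v)"

definition vstate :: "'h::complex_hilbert \<Rightarrow> ('h \<Rightarrow> 'h) \<Rightarrow> complex" where
  "vstate \<zeta> a = cinner \<zeta> (a \<zeta>)"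

definition P_half :: "'h::complex_hilbert \<Rightarrow> ('h \<Rightarrow> 'h) set \<Rightarrow> (('h \<Rightarrow> 'h) \<Rightarrow> ('h \<Rightarrow> 'h)) \<Rightarrow> bool" where
  "P_half \<zeta> A \<tau> \<longleftrightarrow>
     (\<forall>a\<in>A. \<tau> a \<in> A) \<and>
     (\<forall>a\<in>A. \<forall>b\<in>A. \<tau> (\<lambda>v. a v + b v) = (\<lambda>v. \<tau> a v + \<tau> b v)) \<and>
     (\<forall>a\<in>A. \<forall>c. \<tau> (\<lambda>v. scaleC c (a v)) = (\<lambda>v. scaleC c (\<tau> a v))) \<and>
     (\<forall>a\<in>A. pos_op a \<longrightarrow> pos_op (\<tau> a)) \<and>
     (\<forall>a\<in>A. pos_op a \<longrightarrow> Re (vstate \<zeta> (\<tau> a)) \<le> Re (vstate \<zeta> a)) \<and>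
     op_le (\<tau> id) id \<and>
     (\<forall>a\<in>A. Re (vstate \<zeta> (adj (\<tau> a) \<circ> \<tau> a)) \<le> Re (vstate \<zeta> (adj a \<circ> a)))"

end

theory Submission
  imports Defs
begin

lemma scaleC_one[simp]: "scaleC 1 x = x"
  using scaleC_of_real[of 1 x] by simp

lemma scaleC_zero_left[simp]: "scaleC 0 x = 0"
  using scaleC_of_real[of 0 x] by simp

lemma scaleC_zero_right[simp]: "scaleC c 0 = 0"
  using scaleC_add_right[of c 0 0] by simp

lemma scaleC_minus_left: "scaleC (- c) x = - scaleC c x"
  using scaleC_add_left[of c "-c" x] by (simp add: eq_neg_iff_add_eq_0 add.commute)

lemma scaleC_minus_right: "scaleC c (- x) = - scaleC c x"
  using scaleC_add_right[of c x "-x"] by (simp add: eq_neg_iff_add_eq_0 add.commute)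

lemma scaleC_diff_right: "scaleC c (x - y) = scaleC c x - scaleC c y"
  using scaleC_add_right[of c x "-y"] scaleC_minus_right by simp

lemma scaleC_diff_left: "scaleC (c - d) x = scaleC c x - scaleC d x"
  using scaleC_add_left[of c "-d" x] scaleC_minus_left by simp

lemma scaleC_minus1: "scaleC (-1) x = - x"
  by (simp add: scaleC_minus_left)

lemma cinner_add_left: "cinner (x + y) z = cinner x z + cinner y z"
  by (metis cinner_commute cinner_add_right complex_cnj_add)

lemma cinner_scaleC_left: "cinner (scaleC c x) y = cnj c * cinner x y"
  by (metis cinner_commute cinner_scaleC_right complex_cnj_mult complex_cnj_cnj)

lemma cinner_zero_right[simp]: "cinner x 0 = 0"
  using cinner_add_right[of x 0 0] by simp

lemma cinner_zero_left[simp]: "cinner 0 x = 0"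
  using cinner_add_left[of 0 0 x] by simp

lemma cinner_minus_right: "cinner x (- y) = - cinner x y"
  using cinner_add_right[of x y "-y"] by (simp add: eq_neg_iff_add_eq_0 add.commute)

lemma cinner_minus_left: "cinner (- x) y = - cinner x y"
  using cinner_add_left[of x "-x" y] by (simp add: eq_neg_iff_add_eq_0 add.commute)

lemma cinner_diff_right: "cinner x (y - z) = cinner x y - cinner x z"
  using cinner_add_right[of x y "-z"] cinner_minus_right by simp

lemma cinner_diff_left: "cinner (x - y) z = cinner x z - cinner y z"
  using cinner_add_left[of x "-y" z] cinner_minus_left by simp

lemma cinner_self: "cinner x x = complex_of_real ((norm x)\<^sup>2)"
proof -
  have "Im (cinner x x) = 0"
    using cinner_commute[of x x] by (auto simp: complex_eq_iff)
  moreover have "Re (cinner x x) = (norm x)\<^sup>2"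
    by (simp add: Re_cinner power2_norm_eq_inner)
  ultimately show ?thesis by (simp add: complex_eq_iff)
qed

lemma Re_cinner_self: "Re (cinner x x) = (norm x)\<^sup>2"
  by (simp add: cinner_self)

lemma norm_scaleC: "norm (scaleC c x) = cmod c * norm x"
proof -
  have "complex_of_real ((norm (scaleC c x))\<^sup>2) = cinner (scaleC c x) (scaleC c x)"
    by (simp add: cinner_self)
  also have "\<dots> = cnj c * c * cinner x x"
    by (simp add: cinner_scaleC_left cinner_scaleC_right)
  also have "\<dots> = complex_of_real ((cmod c * norm x)\<^sup>2)"
  proof -
    have "cnj c * c = complex_of_real ((cmod c)\<^sup>2)" by (metis complex_norm_square mult.commute)
    then show ?thesis by (simp add: cinner_self power_mult_distrib)
  qed
  finally have "(norm (scaleC c x))\<^sup>2 = (cmod c * norm x)\<^sup>2"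
    using of_real_eq_iff by blast
  then show ?thesis by (simp add: power2_eq_iff_nonneg)
qed

lemma cinner_cauchy: "cmod (cinner x y) \<le> norm x * norm y"
proof (cases "cinner x y = 0")
  case True then show ?thesis by simp
next
  case False
  define c where "c = cnj (cinner x y) / complex_of_real (cmod (cinner x y))"
  have cm: "cmod c = 1" using False by (simp add: c_def norm_divide)
  have "complex_of_real (cmod (cinner x y)) = c * cinner x y"
  proof -
    have "complex_of_real (cmod (cinner x y)) * complex_of_real (cmod (cinner x y)) = cnj (cinner x y) * cinner x y"
      by (metis complex_norm_square mult.commute of_real_mult power2_eq_square)
    then show ?thesis using False by (simp add: c_def field_simps)
  qed
  then have "cmod (cinner x y) = Re (cinner x (scaleC c y))"
    by (metis Re_complex_of_real cinner_scaleC_right)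
  also have "\<dots> = inner x (scaleC c y)" by (simp add: Re_cinner)
  also have "\<dots> \<le> norm x * norm (scaleC c y)" by (rule norm_cauchy_schwarz)
  also have "\<dots> = norm x * norm y" by (simp add: norm_scaleC cm)
  finally show ?thesis .
qed

lemma cinner_eq_zero_imp: "(\<And>y. cinner y x = 0) \<Longrightarrow> (x::'a::complex_hilbert) = 0"
  by (metis cinner_self norm_eq_zero of_real_eq_0_iff zero_less_power2 less_irrefl)

lemma scaleR_as_scaleC: "scaleR r (x::'a::complex_hilbert) = scaleC (complex_of_real r) x"
  by (simp add: scaleC_of_real)

lemma bounded_bilinear_cinner: "bounded_bilinear (cinner :: 'a::complex_hilbert \<Rightarrow> _)"
proof (rule bounded_bilinear.intro)
  fix a a' b b' :: "'a::complex_hilbert" and r :: real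
  show "cinner (a + a') b = cinner a b + cinner a' b" by (rule cinner_add_left)
  show "cinner a (b + b') = cinner a b + cinner a b'" by (rule cinner_add_right)
  show "cinner (r *\<^sub>R a) b = r *\<^sub>R cinner a b"
    by (simp add: scaleR_as_scaleC cinner_scaleC_left scaleR_conv_of_real)
  show "cinner a (r *\<^sub>R b) = r *\<^sub>R cinner a b"
    by (simp add: scaleR_as_scaleC cinner_scaleC_right scaleR_conv_of_real)
  show "\<exists>K. \<forall>a b. norm (cinner a b) \<le> norm a * norm b * K"
    by (rule exI[of _ 1]) (simp add: cinner_cauchy)
qed

lemma parallelogram: "(norm (x - y))\<^sup>2 = 2 * (norm x)\<^sup>2 + 2 * (norm y)\<^sup>2 - (norm (x + y))\<^sup>2"
  for x y :: "'a::real_inner"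
  using dot_norm[of x y] dot_norm_neg[of x y] by simp

lemma Re_mult_cnj: "Re (z * cnj z) = (cmod z)\<^sup>2" "Re (cnj z * z) = (cmod z)\<^sup>2"
  using cmod_power2[of z] by (simp_all add: power2_eq_square)

lemma mult_cnj_sq: "z * cnj z = (complex_of_real (cmod z))\<^sup>2" "cnj z * z = (complex_of_real (cmod z))\<^sup>2"
  by (metis complex_norm_square of_real_power mult.commute)+

lemma dense_eq:
  fixes f g :: "'a::topological_space \<Rightarrow> 'b::t2_space"
  assumes "closure D = UNIV" "continuous_on UNIV f" "continuous_on UNIV g" "\<And>x. x \<in> D \<Longrightarrow> f x = g x"
  shows "f x = g x"
proof -
  have "closed {x. f x = g x}" using closed_Collect_eq assms by blast
  moreover have "D \<subseteq> {x. f x = g x}" using assms(4) by blast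
  ultimately have "closure D \<subseteq> {x. f x = g x}" by (rule closure_minimal[rotated])
  then show ?thesis using assms(1) by blast
qed

lemma dense_le:
  fixes f g :: "'a::topological_space \<Rightarrow> real"
  assumes "closure D = UNIV" "continuous_on UNIV f" "continuous_on UNIV g" "\<And>x. x \<in> D \<Longrightarrow> f x \<le> g x"
  shows "f x \<le> g x"
proof -
  have "closed {x. f x \<le> g x}" using closed_Collect_le assms by blast
  moreover have "D \<subseteq> {x. f x \<le> g x}" using assms(4) by blast
  ultimately have "closure D \<subseteq> {x. f x \<le> g x}" by (rule closure_minimal[rotated])
  then show ?thesis using assms(1) by blast
qed

lemma complex_linear_bounded_linear:
  fixes f :: "'a::complex_hilbert \<Rightarrow> complex"
  assumes add: "\<And>x y. f (x+y) = f x + f y" and sc: "\<And>c x. f (scaleC c x) = c * f x"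
    and bd: "\<And>x. cmod (f x) \<le> K * norm x"
  shows "bounded_linear f"
proof (rule bounded_linear_intro[where K=K])
  show "f (r *\<^sub>R x) = r *\<^sub>R f x" for r x
    by (simp add: scaleR_as_scaleC sc scaleR_conv_of_real)
  show "norm (f x) \<le> norm x * K" for x using bd[of x] by (simp add: mult.commute)
qed (rule add)

lemma riesz:
  fixes f :: "'a::complex_hilbert \<Rightarrow> complex"
  assumes add: "\<And>x y. f (x+y) = f x + f y" and sc: "\<And>c x. f (scaleC c x) = c * f x"
    and bd: "\<And>x. cmod (f x) \<le> K * norm x"
  shows "\<exists>w. \<forall>x. f x = cinner w x"
proof (cases "\<forall>x. f x = 0")
  case True then show ?thesis by (intro exI[of _ 0]) simp
next
  case False
  then obtain x0 where x0: "f x0 \<noteq> 0" by blast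
  have bl: "bounded_linear f" by (rule complex_linear_bounded_linear[OF add sc bd])
  have f0: "f 0 = 0" using sc[of 0 0] by simp
  have cont: "isCont f x" for x using bl by (simp add: linear_continuous_at)
  define S where "S = {Re (f x) | x. norm x \<le> 1}"
  have Sne: "S \<noteq> {}" unfolding S_def by (auto intro: exI[of _ 0])
  have Sbdd: "bdd_above S"
  proof -
    have "Re (f x) \<le> \<bar>K\<bar>" if "norm x \<le> 1" for x
    proof -
      have "Re (f x) \<le> cmod (f x)" by (rule complex_Re_le_cmod)
      also have "\<dots> \<le> K * norm x" by (rule bd)
      also have "\<dots> \<le> \<bar>K\<bar> * norm x" by (simp add: mult_right_mono)
      also have "\<dots> \<le> \<bar>K\<bar>" using that by (simp add: mult_left_le)
      finally show ?thesis .
    qed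
    then show ?thesis unfolding S_def bdd_above_def by blast
  qed
  define s where "s = Sup S"
  have sup_bound: "Re (f z) \<le> s * norm z" for z
  proof (cases "z = 0")
    case True then show ?thesis by (simp add: f0)
  next
    case False
    define z' where "z' = scaleC (complex_of_real (1 / norm z)) z"
    have "norm z' = 1" using False by (simp add: z'_def norm_scaleC norm_divide)
    then have "Re (f z') \<in> S" unfolding S_def by auto
    then have "Re (f z') \<le> s" unfolding s_def using Sbdd by (rule cSup_upper)
    moreover have "Re (f z') = Re (f z) / norm z" by (simp add: z'_def sc)
    ultimately show ?thesis using False by (simp add: divide_le_eq mult.commute)
  qed
  have spos: "s > 0"
  proof -
    define z where "z = scaleC (cnj (f x0)) x0"
    have "f z = cnj (f x0) * f x0" by (simp add: z_def sc)
    then have "Re (f z) = (cmod (f x0))\<^sup>2" by (simp only: Re_mult_cnj)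
    then have "0 < Re (f z)" using x0 by simp
    then have "0 < s * norm z" using sup_bound[of z] by linarith
    then show ?thesis by (simp add: zero_less_mult_iff)
  qed
  have "\<forall>n. \<exists>x. norm x \<le> 1 \<and> s - 1 / (real n + 1) < Re (f x)"
  proof
    fix n
    have "s - 1 / (real n + 1) < s" by simp
    then obtain y where "y \<in> S" "s - 1 / (real n + 1) < y"
      unfolding s_def using less_cSupE[OF _ Sne] by blast
    then show "\<exists>x. norm x \<le> 1 \<and> s - 1 / (real n + 1) < Re (f x)" unfolding S_def by auto
  qed
  then obtain xs where xs1: "\<And>n. norm (xs n) \<le> 1" and xs2: "\<And>n. s - 1 / (real n + 1) < Re (f (xs n))"
    by metis
  have key: "(norm (xs n - xs m))\<^sup>2 \<le> 4 * (1 / (real n + 1) + 1 / (real m + 1)) / s" for n m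
  proof -
    define d where "d = (1 / (real n + 1) + 1 / (real m + 1)) / s"
    have dpos: "d \<ge> 0" using spos by (simp add: d_def)
    have p: "(norm (xs n - xs m))\<^sup>2 \<le> 4 - (norm (xs n + xs m))\<^sup>2"
    proof -
      have "(norm (xs n))\<^sup>2 \<le> 1" "(norm (xs m))\<^sup>2 \<le> 1"
        using xs1 by (simp_all add: power_le_one)
      then show ?thesis using parallelogram[of "xs n" "xs m"] by linarith
    qed
    have "2 * s - s * d < Re (f (xs n + xs m))"
      using xs2[of n] xs2[of m] spos by (simp add: add d_def)
    also have "\<dots> \<le> s * norm (xs n + xs m)" by (rule sup_bound)
    finally have "s * (2 - d) < s * norm (xs n + xs m)" by (simp add: algebra_simps)
    then have t: "2 - d < norm (xs n + xs m)" using spos by simp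
    show ?thesis
    proof (cases "d \<le> 2")
      case True
      then have "(2 - d)\<^sup>2 \<le> (norm (xs n + xs m))\<^sup>2"
        using t by (intro power_mono) auto
      then have "(norm (xs n - xs m))\<^sup>2 \<le> 4 - (2 - d)\<^sup>2" using p by linarith
      also have "\<dots> \<le> 4 * d" using dpos by (simp add: power2_eq_square algebra_simps)
      finally show ?thesis by (simp add: d_def)
    next
      case False
      have "(norm (xs n - xs m))\<^sup>2 \<le> 4" using p zero_le_power2[of "norm (xs n + xs m)"] by linarith
      also have "\<dots> \<le> 4 * d" using False by simp
      finally show ?thesis by (simp add: d_def)
    qed
  qed
  have "Cauchy xs"
  proof (rule metric_CauchyI)
    fix e :: real assume e: "e > 0"
    obtain N :: nat where N: "8 / (s * e\<^sup>2) < real N + 1"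
      using reals_Archimedean2 by (metis add.commute less_add_one order_less_trans)
    have "dist (xs m) (xs n) < e" if "m \<ge> N" "n \<ge> N" for m n
    proof -
      have se: "s * e\<^sup>2 > 0" using spos e by simp
      have "1 / (real m + 1) \<le> 1 / (real N + 1)" "1 / (real n + 1) \<le> 1 / (real N + 1)"
        using that by (simp_all add: frac_le)
      then have "4 * (1 / (real m + 1) + 1 / (real n + 1)) \<le> 8 / (real N + 1)" by simp
      then have "4 * (1 / (real m + 1) + 1 / (real n + 1)) / s \<le> 8 / (real N + 1) / s"
        using spos by (rule divide_right_mono[OF _ less_imp_le])
      also have "\<dots> < e\<^sup>2"
      proof -
        have h: "8 < (real N + 1) * (s * e\<^sup>2)" using N se by (simp add: divide_less_eq mult.commute)
        have "8 / (real N + 1) / s = 8 / ((real N + 1) * s)" by simp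
        also have "\<dots> < e\<^sup>2" using h spos by (subst pos_divide_less_eq) (simp_all add: algebra_simps add_pos_nonneg)
        finally show ?thesis .
      qed
      finally have "(norm (xs m - xs n))\<^sup>2 < e\<^sup>2" using key[of m n] by linarith
      then show ?thesis using e by (simp add: dist_norm power_less_imp_less_base)
    qed
    then show "\<exists>M. \<forall>m\<ge>M. \<forall>n\<ge>M. dist (xs m) (xs n) < e" by blast
  qed
  then obtain u where lim: "xs \<longlonglongrightarrow> u" using Cauchy_convergent_iff convergent_def by blast
  have nu1: "norm u \<le> 1"
    using tendsto_norm[OF lim] by (rule LIMSEQ_le_const2) (use xs1 in auto)
  have flim: "(\<lambda>n. Re (f (xs n))) \<longlonglongrightarrow> Re (f u)"
    using cont lim by (intro tendsto_Re isCont_tendsto_compose[where g=f]) auto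
  have "(\<lambda>n. s - 1 / (real n + 1)) \<longlonglongrightarrow> s - 0"
    using LIMSEQ_inverse_real_of_nat by (intro tendsto_diff tendsto_const) (simp add: inverse_eq_divide add.commute)
  then have l: "(\<lambda>n. s - 1 / (real n + 1)) \<longlonglongrightarrow> s" by simp
  have "s \<le> Re (f u)"
    by (rule LIMSEQ_le[OF l flim]) (use xs2 in \<open>auto intro: less_imp_le\<close>)
  moreover have "s * norm u \<le> s" using nu1 spos by (simp add: mult_left_le)
  ultimately have Refu: "Re (f u) = s" using sup_bound[of u] by linarith
  have "s \<le> s * norm u" using Refu sup_bound[of u] by simp
  then have nu: "norm u = 1" using nu1 spos by (simp add: mult_le_cancel_left1)
  have fu: "f u = complex_of_real s"
  proof -
    define c where "c = cnj (f u)"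
    have e1: "Re (f (scaleC c u)) = (cmod (f u))\<^sup>2" by (simp only: c_def sc Re_mult_cnj)
    have e2: "Re (f (scaleC c u)) \<le> s * cmod (f u)" using sup_bound[of "scaleC c u"] by (simp add: norm_scaleC nu c_def)
    have "cmod (f u) * cmod (f u) \<le> s * cmod (f u)" using e1 e2 by (simp add: power2_eq_square)
    then have "cmod (f u) \<le> s" using spos
      by (cases "cmod (f u) = 0") (simp_all add: mult_le_cancel_right)
    moreover have "s \<le> cmod (f u)" using Refu complex_Re_le_cmod by metis
    ultimately have "cmod (f u) = Re (f u)" using Refu by simp
    then have "Im (f u) = 0" using cmod_Re_le_iff by (metis abs_of_nonneg cmod_eq_Re norm_ge_zero cmod_power2 add_cancel_left_right power2_eq_square real_sqrt_abs2 zero_eq_power2)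
    then show ?thesis using Refu by (simp add: complex_eq_iff)
  qed
  have orth: "cinner u k = 0" if fk: "f k = 0" for k
  proof -
    define c where "c = cinner u k"
    define e where "e = 1 / ((norm k)\<^sup>2 + 1)"
    have kp: "(norm k)\<^sup>2 + 1 > 0" using zero_le_power2[of "norm k"] by linarith
    have epos: "e > 0" using kp by (simp add: e_def)
    have ek: "e * (norm k)\<^sup>2 < 1" using kp by (simp add: e_def field_simps)
    define t where "t = - complex_of_real e * cnj c"
    define z where "z = u + scaleC t k"
    have "Re (f z) = s" by (simp add: z_def add sc fk fu)
    then have "1 \<le> norm z" using sup_bound[of z] spos by (simp add: mult_le_cancel_left1)
    then have "1 \<le> (norm z)\<^sup>2" by (simp add: one_le_power)
    also have "(norm z)\<^sup>2 = Re (cinner z z)" by (simp add: Re_cinner_self)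
    also have "cinner z z = cinner u u + t * cinner u k + cnj t * cinner k u + cnj t * t * cinner k k"
      by (simp add: z_def cinner_add_left cinner_add_right cinner_scaleC_left cinner_scaleC_right algebra_simps)
    also have "Re \<dots> = 1 - 2 * e * (cmod c)\<^sup>2 + e\<^sup>2 * (cmod c)\<^sup>2 * (norm k)\<^sup>2"
    proof -
      have "cinner k u = cnj c" by (simp add: c_def cinner_commute[of k u])
      moreover have "t * c = - complex_of_real (e * (cmod c)\<^sup>2)"
        by (simp add: t_def mult_cnj_sq mult.commute mult.left_commute)
      moreover have "cnj t * t = complex_of_real (e\<^sup>2 * (cmod c)\<^sup>2)"
      proof -
        have "cnj t * t = complex_of_real (e * e) * (cnj c * c)" by (simp add: t_def algebra_simps)
        then show ?thesis by (simp add: mult_cnj_sq power2_eq_square)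
      qed
      ultimately show ?thesis
        by (simp add: cinner_self nu c_def[symmetric] complex_cnj_mult[symmetric]
            del: complex_cnj_mult)
    qed
    finally have "2 * e * (cmod c)\<^sup>2 \<le> e * (cmod c)\<^sup>2 * (e * (norm k)\<^sup>2)"
      by (simp add: power2_eq_square algebra_simps)
    moreover have "e * (cmod c)\<^sup>2 * (e * (norm k)\<^sup>2) \<le> e * (cmod c)\<^sup>2"
      using ek epos by (intro mult_left_le) auto
    ultimately have "e * (cmod c)\<^sup>2 \<le> 0" by linarith
    then have "(cmod c)\<^sup>2 \<le> 0" using epos by (simp add: mult_le_0_iff)
    then show ?thesis by (simp add: c_def)
  qed
  show ?thesis
  proof (intro exI allI)
    fix v
    define k where "k = scaleC (f u) v - scaleC (f v) u"
    have "f k = 0" by (simp add: k_def scaleC_diff_right diff_conv_add_uminus add scaleC_minus1[symmetric] sc scaleC_scaleC mult.commute)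
    then have "cinner u k = 0" by (rule orth)
    then have "f u * cinner u v - f v * cinner u u = 0"
      by (simp add: k_def cinner_diff_right cinner_scaleC_right)
    then show "f v = cinner (scaleC (complex_of_real s) u) v"
      by (simp add: cinner_scaleC_left fu cinner_self nu)
  qed
qed

lemma bop_add: "bounded_op A \<Longrightarrow> A (x + y) = A x + A y"
  by (simp add: bounded_op_def)

lemma bop_scaleC: "bounded_op A \<Longrightarrow> A (scaleC c x) = scaleC c (A x)"
  by (simp add: bounded_op_def)

lemma bop_zero: "bounded_op A \<Longrightarrow> A 0 = 0"
  using bop_scaleC[of A 0 0] by simp

lemma bop_minus: "bounded_op A \<Longrightarrow> A (- x) = - A x"
  using bop_scaleC[of A "-1" x] by (simp add: scaleC_minus1)

lemma bop_diff: "bounded_op A \<Longrightarrow> A (x - y) = A x - A y"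
  using bop_add[of A x "-y"] bop_minus[of A y] by simp

lemma bop_bound: assumes "bounded_op A" obtains K where "K \<ge> 0" "\<And>x. norm (A x) \<le> K * norm x"
proof -
  obtain K where K: "\<And>x. norm (A x) \<le> K * norm x" using assms by (auto simp: bounded_op_def)
  have "norm (A x) \<le> max K 0 * norm x" for x
    using K[of x] by (metis max.cobounded1 mult_right_mono norm_ge_zero order_trans)
  then show ?thesis using that[of "max K 0"] by simp
qed

lemma bop_bounded_linear: assumes "bounded_op A" shows "bounded_linear A"
proof -
  obtain K where "K \<ge> 0" "\<And>x. norm (A x) \<le> K * norm x" using bop_bound assms by blast
  then show ?thesis
    by (intro bounded_linear_intro[where K=K]) (auto simp: bop_add[OF assms] scaleR_as_scaleC bop_scaleC[OF assms] mult.commute)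
qed

lemma bop_cont: "bounded_op A \<Longrightarrow> continuous_on UNIV A"
  by (intro linear_continuous_on bop_bounded_linear)

lemma bop_isCont: "bounded_op A \<Longrightarrow> isCont A x"
  by (intro linear_continuous_at bop_bounded_linear)

lemma bop_id: "bounded_op id"
  unfolding bounded_op_def by (auto intro: exI[of _ 1])

lemma bop_id': "bounded_op (\<lambda>v. v)"
  using bop_id by (simp add: id_def)

lemma bop_plus: assumes "bounded_op A" "bounded_op B" shows "bounded_op (\<lambda>v. A v + B v)"
proof -
  obtain K where K: "\<And>x. norm (A x) \<le> K * norm x" using bop_bound assms(1) by blast
  obtain L where L: "\<And>x. norm (B x) \<le> L * norm x" using bop_bound assms(2) by blast
  have "norm (A x + B x) \<le> (K + L) * norm x" for x
    using norm_triangle_ineq[of "A x" "B x"] K[of x] L[of x] by (simp add: algebra_simps)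
  then show ?thesis unfolding bounded_op_def
    by (auto simp: scaleC_add_right algebra_simps bop_add[OF assms(1)] bop_add[OF assms(2)]
        bop_scaleC[OF assms(1)] bop_scaleC[OF assms(2)] intro!: exI[of _ "K + L"])
qed

lemma bop_scal: assumes "bounded_op A" shows "bounded_op (\<lambda>v. scaleC c (A v))"
proof -
  obtain K where K: "\<And>x. norm (A x) \<le> K * norm x" using bop_bound assms(1) by blast
  have "norm (scaleC c (A x)) \<le> (cmod c * K) * norm x" for x
    using K[of x] by (simp add: norm_scaleC mult.assoc mult_left_mono)
  then show ?thesis unfolding bounded_op_def
    by (auto simp: scaleC_add_right scaleC_scaleC mult.commute bop_add[OF assms(1)] bop_scaleC[OF assms(1)]
        intro!: exI[of _ "cmod c * K"])
qed

lemma bop_comp: assumes "bounded_op A" "bounded_op B" shows "bounded_op (A \<circ> B)"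
proof -
  obtain K where K: "K \<ge> 0" "\<And>x. norm (A x) \<le> K * norm x" using bop_bound assms(1) by blast
  obtain L where L: "\<And>x. norm (B x) \<le> L * norm x" using bop_bound assms(2) by blast
  have "norm (A (B x)) \<le> (K * L) * norm x" for x
    using K(2)[of "B x"] L[of x] K(1) by (metis mult.assoc mult_left_mono order_trans)
  then show ?thesis using assms unfolding bounded_op_def by auto
qed

lemma bop_minus_op: assumes "bounded_op A" "bounded_op B" shows "bounded_op (\<lambda>v. A v - B v)"
proof -
  have "bounded_op (\<lambda>v. A v + scaleC (-1) (B v))" by (intro bop_plus bop_scal assms)
  then show ?thesis by (simp add: scaleC_minus1)
qed

lemma bop_zero_op: "bounded_op (\<lambda>v. 0)"
  unfolding bounded_op_def by (auto intro!: exI[of _ 0])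

lemma cinner_cont_right: "continuous_on UNIV (\<lambda>x. cinner w x)"
  by (intro continuous_intros bounded_bilinear.continuous_on[OF bounded_bilinear_cinner])

lemma cinner_cont_left: "continuous_on UNIV (\<lambda>x. cinner x w)"
  by (intro continuous_intros bounded_bilinear.continuous_on[OF bounded_bilinear_cinner])

lemma cinner_cont_both: "continuous_on UNIV f \<Longrightarrow> continuous_on UNIV g \<Longrightarrow> continuous_on UNIV (\<lambda>x. cinner (f x) (g x))"
  by (rule bounded_bilinear.continuous_on[OF bounded_bilinear_cinner])

lemma dense_vec_eq:
  assumes "closure D = UNIV" "\<And>v. v \<in> D \<Longrightarrow> cinner w v = cinner w' v"
  shows "w = w'"
proof -
  have "cinner w v = cinner w' v" for v
    by (rule dense_eq[OF assms(1) cinner_cont_right cinner_cont_right assms(2)])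
  then have "cinner (w - w') v = 0" for v by (simp add: cinner_diff_left)
  then have "cinner v (w - w') = 0" for v by (metis cinner_commute complex_cnj_zero)
  then show ?thesis using cinner_eq_zero_imp[of "w - w'"] by simp
qed

lemma dense_norm_bound:
  assumes "closure D = UNIV" "C \<ge> 0" "\<And>v. v \<in> D \<Longrightarrow> cmod (cinner w v) \<le> C * norm v"
  shows "norm w \<le> C"
proof -
  have c: "continuous_on UNIV (\<lambda>v. cmod (cinner w v))" by (intro continuous_intros cinner_cont_right)
  have "cmod (cinner w v) \<le> C * norm v" for v
    by (rule dense_le[OF assms(1) c _ assms(3)]) (intro continuous_intros)
  from this[of w] have "(norm w)\<^sup>2 \<le> C * norm w" by (simp add: cinner_self norm_power)
  then show ?thesis
    using assms(2) by (cases "norm w = 0") (auto simp: power2_eq_square mult_le_cancel_right)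
qed

section \<open>Adjoints\<close>

lemma adj_exists: assumes "bounded_op A" shows "\<exists>B. \<forall>x y. cinner (A x) y = cinner x (B y)"
proof -
  obtain K where K: "\<And>x. norm (A x) \<le> K * norm x" using bop_bound assms by blast
  have "\<exists>w. \<forall>x. cinner y (A x) = cinner w x" for y
  proof (rule riesz[where K="norm y * K"])
    show "cinner y (A (x + x')) = cinner y (A x) + cinner y (A x')" for x x'
      by (simp add: bop_add[OF assms] cinner_add_right)
    show "cinner y (A (scaleC c x)) = c * cinner y (A x)" for c x
      by (simp add: bop_scaleC[OF assms] cinner_scaleC_right)
    show "cmod (cinner y (A x)) \<le> norm y * K * norm x" for x
      using cinner_cauchy[of y "A x"] K[of x] by (metis mult.assoc mult_left_mono norm_ge_zero order_trans)
  qed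
  then obtain B where "\<And>y x. cinner y (A x) = cinner (B y) x" by metis
  then have "cinner (A x) y = cinner x (B y)" for x y by (metis cinner_commute)
  then show ?thesis by blast
qed

lemma adj_prop: "bounded_op A \<Longrightarrow> cinner (A x) y = cinner x (adj A y)"
  unfolding adj_def using someI_ex[OF adj_exists] by blast

lemma adj_prop2: "bounded_op A \<Longrightarrow> cinner x (A y) = cinner (adj A x) y"
  by (metis adj_prop cinner_commute)

lemma ext_cinner: "(\<And>x. cinner x u = cinner x v) \<Longrightarrow> u = v"
  using cinner_eq_zero_imp[of "u - v"] by (simp add: cinner_diff_right)

lemma adj_unique: assumes "\<And>x y. cinner (A x) y = cinner x (B y)" shows "adj A = B"
proof -
  have "\<forall>x y. cinner (A x) y = cinner x (adj A y)"
    unfolding adj_def using someI[of "\<lambda>B. \<forall>x y. cinner (A x) y = cinner x (B y)" B] assms by blast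
  then show ?thesis using assms by (intro ext ext_cinner) metis
qed

lemma bop_adj: assumes A: "bounded_op A" shows "bounded_op (adj A)"
proof -
  obtain K where K: "K \<ge> 0" "\<And>x. norm (A x) \<le> K * norm x" using bop_bound A by blast
  have add: "adj A (x + y) = adj A x + adj A y" for x y
    by (rule ext_cinner) (simp add: adj_prop[OF A, symmetric] cinner_add_right)
  have sc: "adj A (scaleC c x) = scaleC c (adj A x)" for c x
    by (rule ext_cinner) (simp add: adj_prop[OF A, symmetric] cinner_scaleC_right)
  have "norm (adj A y) \<le> K * norm y" for y
  proof -
    have "(norm (adj A y))\<^sup>2 = Re (cinner (A (adj A y)) y)"
      by (simp add: adj_prop[OF A] Re_cinner_self)
    also have "\<dots> \<le> cmod (cinner (A (adj A y)) y)" by (rule complex_Re_le_cmod)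
    also have "\<dots> \<le> norm (A (adj A y)) * norm y" by (rule cinner_cauchy)
    also have "\<dots> \<le> K * norm (adj A y) * norm y" by (simp add: K(2) mult_right_mono)
    finally have "norm (adj A y) * norm (adj A y) \<le> norm (adj A y) * (K * norm y)"
      by (simp add: power2_eq_square algebra_simps)
    then show ?thesis
      by (cases "norm (adj A y) = 0") (use K(1) in \<open>auto simp: mult_le_cancel_left\<close>)
  qed
  then show ?thesis unfolding bounded_op_def using add sc by blast
qed

lemma adj_adj: "bounded_op A \<Longrightarrow> adj (adj A) = A"
  by (rule adj_unique) (metis adj_prop cinner_commute)

lemma adj_comp: assumes "bounded_op A" "bounded_op B" shows "adj (A \<circ> B) = adj B \<circ> adj A"
  by (rule adj_unique) (simp add: adj_prop assms)

lemma adj_comp_apply: assumes "bounded_op A" "bounded_op B" shows "adj (\<lambda>v. A (B v)) = (\<lambda>v. adj B (adj A v))"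
  using adj_comp[OF assms] by (simp add: comp_def)

lemma adj_plus: assumes "bounded_op A" "bounded_op B" shows "adj (\<lambda>v. A v + B v) = (\<lambda>v. adj A v + adj B v)"
  by (rule adj_unique) (simp add: adj_prop assms cinner_add_left cinner_add_right)

lemma adj_scal: assumes "bounded_op A" shows "adj (\<lambda>v. scaleC c (A v)) = (\<lambda>v. scaleC (cnj c) (adj A v))"
  by (rule adj_unique) (simp add: adj_prop assms cinner_scaleC_left cinner_scaleC_right)

lemma adj_id: "adj id = id"
  by (rule adj_unique) simp

lemma adj_id': "adj (\<lambda>v. v) = (\<lambda>v. v)"
  by (rule adj_unique) simp

lemma comm_bop: "B \<in> commutant S \<Longrightarrow> bounded_op B"
  by (simp add: commutant_def)

lemma comm_commute: "B \<in> commutant S \<Longrightarrow> A \<in> S \<Longrightarrow> A (B v) = B (A v)"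
  unfolding commutant_def by (metis (mono_tags, lifting) comp_apply mem_Collect_eq)

lemma commI: "bounded_op B \<Longrightarrow> (\<And>A v. A \<in> S \<Longrightarrow> A (B v) = B (A v)) \<Longrightarrow> B \<in> commutant S"
  unfolding commutant_def by (auto simp: fun_eq_iff)

lemma comm_id: "(\<lambda>v. v) \<in> commutant S"
  by (rule commI[OF bop_id']) simp

lemma comm_id2: "id \<in> commutant S"
  using comm_id by (simp add: id_def)

lemma comm_plus: "\<forall>A\<in>S. bounded_op A \<Longrightarrow> B \<in> commutant S \<Longrightarrow> C \<in> commutant S \<Longrightarrow> (\<lambda>v. B v + C v) \<in> commutant S"
  by (rule commI) (auto intro: bop_plus comm_bop simp: bop_add, metis comm_commute)

lemma comm_scal: "\<forall>A\<in>S. bounded_op A \<Longrightarrow> B \<in> commutant S \<Longrightarrow> (\<lambda>v. scaleC c (B v)) \<in> commutant S"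
  by (rule commI) (auto intro: bop_scal comm_bop simp: bop_scaleC, metis comm_commute)

lemma comm_comp: "B \<in> commutant S \<Longrightarrow> C \<in> commutant S \<Longrightarrow> (B \<circ> C) \<in> commutant S"
  by (rule commI) (auto intro: bop_comp comm_bop simp: comm_commute[of B S] comm_commute[of C S])

lemma comm_comp': "B \<in> commutant S \<Longrightarrow> C \<in> commutant S \<Longrightarrow> (\<lambda>v. B (C v)) \<in> commutant S"
  using comm_comp[of B S C] by (simp add: comp_def)

lemma comm_minus: "\<forall>A\<in>S. bounded_op A \<Longrightarrow> B \<in> commutant S \<Longrightarrow> C \<in> commutant S \<Longrightarrow> (\<lambda>v. B v - C v) \<in> commutant S"
  using comm_plus[of S B "\<lambda>v. scaleC (-1) (C v)"] comm_scal[of S C "-1"] by (simp add: scaleC_minus1)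

lemma comm_adj:
  assumes "\<forall>A\<in>S. bounded_op A \<and> adj A \<in> S" "B \<in> commutant S"
  shows "adj B \<in> commutant S"
proof (rule commI)
  have B: "bounded_op B" using assms(2) comm_bop by blast
  show "bounded_op (adj B)" using bop_adj[OF B] .
  fix A v assume A: "A \<in> S"
  have bA: "bounded_op A" "adj A \<in> S" using assms(1) A by auto
  have "B \<circ> adj A = adj A \<circ> B" using comm_commute[OF assms(2) bA(2)] by (auto simp: fun_eq_iff)
  then have "adj (B \<circ> adj A) = adj (adj A \<circ> B)" by simp
  then have "A \<circ> adj B = adj B \<circ> A"
    by (simp add: adj_comp bA B bop_adj adj_adj)
  then show "A (adj B v) = adj B (A v)" by (metis comp_apply)
qed

section \<open>Cauchy-Schwarz for semi-definite forms\<close>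

lemma cnj_mult_self: "cnj z * z = complex_of_real ((cmod z)\<^sup>2)" "z * cnj z = complex_of_real ((cmod z)\<^sup>2)"
  by (metis complex_norm_square mult.commute) (metis complex_norm_square)

lemma scalar_cs:
  fixes A B :: real and C :: complex
  assumes h: "\<And>t. 0 \<le> A + 2 * Re (t * C) + (cmod t)\<^sup>2 * B" and B: "B \<ge> 0"
  shows "(cmod C)\<^sup>2 \<le> A * B"
proof (cases "B > 0")
  case True
  define t where "t = - cnj C / complex_of_real B"
  have "t * C = - (cnj C * C) / complex_of_real B" by (simp add: t_def)
  also have "\<dots> = - complex_of_real ((cmod C)\<^sup>2 / B)" by (simp only: cnj_mult_self) simp
  finally have "Re (t * C) = - (cmod C)\<^sup>2 / B" by simp
  moreover have "(cmod t)\<^sup>2 = (cmod C)\<^sup>2 / B\<^sup>2"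
    using True by (simp add: t_def norm_divide power_divide)
  ultimately have "0 \<le> A - 2 * (cmod C)\<^sup>2 / B + (cmod C)\<^sup>2 / B\<^sup>2 * B" using h[of t] by simp
  also have "(cmod C)\<^sup>2 / B\<^sup>2 * B = (cmod C)\<^sup>2 / B" using True by (simp add: power2_eq_square)
  finally have "(cmod C)\<^sup>2 / B \<le> A" by simp
  then show ?thesis using True by (simp add: divide_le_eq mult.commute)
next
  case False
  then have B0: "B = 0" using B by simp
  show ?thesis
  proof (rule ccontr)
    assume "\<not> ?thesis"
    then have Cp: "(cmod C)\<^sup>2 > 0" using B0 by simp
    define r where "r = (\<bar>A\<bar> + 1) / (2 * (cmod C)\<^sup>2)"
    define t where "t = - complex_of_real r * cnj C"
    have "t * C = - complex_of_real r * (cnj C * C)" by (simp add: t_def)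
    also have "\<dots> = - complex_of_real (r * (cmod C)\<^sup>2)" by (simp only: cnj_mult_self) simp
    finally have "Re (t * C) = - r * (cmod C)\<^sup>2" by simp
    then have "0 \<le> A - 2 * r * (cmod C)\<^sup>2" using h[of t] B0 by simp
    also have "2 * r * (cmod C)\<^sup>2 = \<bar>A\<bar> + 1" using Cp by (simp add: r_def)
    finally show False by simp
  qed
qed

lemma sesq_cs:
  fixes A B C D :: complex
  assumes h: "\<And>t. Im (A + t * C + cnj t * D + cnj t * t * B) = 0 \<and> 0 \<le> Re (A + t * C + cnj t * D + cnj t * t * B)"
    and B: "Im B = 0" "0 \<le> Re B"
  shows "D = cnj C" "(cmod C)\<^sup>2 \<le> Re A * Re B"
proof -
  have A: "Im A = 0" using h[of 0] by simp
  have "Im (C + D) = 0" using h[of 1] A B by simp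
  moreover have "Re (C - D) = 0" using h[of \<i>] A B by simp
  ultimately show DC: "D = cnj C" by (simp add: complex_eq_iff)
  show "(cmod C)\<^sup>2 \<le> Re A * Re B"
  proof (rule scalar_cs[OF _ B(2)])
    fix t
    have "A + t * C + cnj t * D + cnj t * t * B = A + (t * C + cnj (t * C)) + complex_of_real ((cmod t)\<^sup>2) * B"
      by (simp only: DC cnj_mult_self complex_cnj_mult) (simp add: algebra_simps)
    moreover have "Re (t * C + cnj (t * C)) = 2 * Re (t * C)" by simp
    moreover have "Re (complex_of_real ((cmod t)\<^sup>2) * B) = (cmod t)\<^sup>2 * Re B" using B by simp
    ultimately have "Re (A + t * C + cnj t * D + cnj t * t * B) = Re A + 2 * Re (t * C) + (cmod t)\<^sup>2 * Re B"
      by (simp only: plus_complex.sel)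
    then show "0 \<le> Re A + 2 * Re (t * C) + (cmod t)\<^sup>2 * Re B" using conjunct2[OF h[of t]] by linarith
  qed
qed

lemma pos_bop: "pos_op P \<Longrightarrow> bounded_op P"
  by (simp add: pos_op_def)

lemma pos_Im: "pos_op P \<Longrightarrow> Im (cinner v (P v)) = 0"
  by (simp add: pos_op_def)

lemma pos_Re: "pos_op P \<Longrightarrow> 0 \<le> Re (cinner v (P v))"
  by (simp add: pos_op_def)

lemma polar_zero:
  assumes C: "bounded_op C" and h: "\<And>w. cinner w (C w) = 0"
  shows "C v = 0"
proof -
  have "cinner u (C v) = 0" for u
  proof -
    have e1: "cinner (u + v) (C (u + v)) = cinner u (C u) + cinner u (C v) + cinner v (C u) + cinner v (C v)"
      by (simp add: bop_add[OF C] cinner_add_left cinner_add_right)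
    have e2: "cinner (u + scaleC \<i> v) (C (u + scaleC \<i> v)) =
        cinner u (C u) + \<i> * cinner u (C v) - \<i> * cinner v (C u) + cinner v (C v)"
      by (simp add: bop_add[OF C] bop_scaleC[OF C] cinner_add_left cinner_add_right cinner_scaleC_left cinner_scaleC_right algebra_simps)
    have "cinner u (C v) + cinner v (C u) = 0" using e1 h by simp
    moreover have "cinner u (C v) - cinner v (C u) = 0" using e2 h by (simp add: right_diff_distrib[symmetric])
    ultimately have "(cinner u (C v) + cinner v (C u)) + (cinner u (C v) - cinner v (C u)) = 0" by simp
    then have "2 * cinner u (C v) = 0" by (simp add: algebra_simps)
    then show ?thesis by simp
  qed
  then show ?thesis by (rule cinner_eq_zero_imp)
qed

lemma pos_adj: assumes P: "pos_op P" shows "adj P = P"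
proof -
  have bP: "bounded_op P" using P pos_bop by blast
  have bC: "bounded_op (\<lambda>v. adj P v - P v)" by (intro bop_minus_op bop_adj bP)
  have "cinner w (adj P w - P w) = 0" for w
  proof -
    have "cinner w (adj P w) = cinner (P w) w" by (simp add: adj_prop[OF bP])
    also have "\<dots> = cnj (cinner w (P w))" by (rule cinner_commute)
    also have "\<dots> = cinner w (P w)" using pos_Im[OF P, of w] by (simp add: complex_eq_iff)
    finally show "cinner w (adj P w - P w) = 0" by (simp add: cinner_diff_right)
  qed
  then have "adj P v - P v = 0" for v using polar_zero[OF bC] by simp
  then show ?thesis by auto
qed

lemma pos_sa: assumes "pos_op P" shows "cinner (P x) y = cinner x (P y)"
  using adj_prop[OF pos_bop[OF assms]] pos_adj[OF assms] by simp

lemma pos_cs: assumes P: "pos_op P"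
  shows "(cmod (cinner u (P w)))\<^sup>2 \<le> Re (cinner u (P u)) * Re (cinner w (P w))"
proof -
  have bP: "bounded_op P" using P pos_bop by blast
  have hyp: "Im (cinner u (P u) + t * cinner u (P w) + cnj t * cinner w (P u) + cnj t * t * cinner w (P w)) = 0 \<and>
      0 \<le> Re (cinner u (P u) + t * cinner u (P w) + cnj t * cinner w (P u) + cnj t * t * cinner w (P w))" for t
  proof -
    have e: "cinner (u + scaleC t w) (P (u + scaleC t w)) = cinner u (P u) + t * cinner u (P w) + cnj t * cinner w (P u) + cnj t * t * cinner w (P w)"
      by (simp add: bop_add[OF bP] bop_scaleC[OF bP] cinner_add_left cinner_add_right cinner_scaleC_left cinner_scaleC_right algebra_simps)
    then show "Im (cinner u (P u) + t * cinner u (P w) + cnj t * cinner w (P u) + cnj t * t * cinner w (P w)) = 0 \<and>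
      0 \<le> Re (cinner u (P u) + t * cinner u (P w) + cnj t * cinner w (P u) + cnj t * t * cinner w (P w))"
      by (simp only: e[symmetric]) (use pos_Im[OF P] pos_Re[OF P] in blast)
  qed
  show ?thesis using sesq_cs(2)[OF hyp pos_Im[OF P] pos_Re[OF P]] .
qed

section \<open>Products of commuting positive operators\<close>

lemma funpow_props:
  assumes Q: "bounded_op Q" and Qsa: "\<And>x y. cinner (Q x) y = cinner x (Q y)"
    and comm: "\<And>v. P (Q v) = Q (P v)" and contr: "\<And>v. norm (Q v) \<le> norm v"
  shows "norm ((Q ^^ n) v) \<le> norm v" "cinner ((Q ^^ n) x) y = cinner x ((Q ^^ n) y)"
    "P ((Q ^^ n) v) = (Q ^^ n) (P v)"
proof -
  show "norm ((Q ^^ n) v) \<le> norm v"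
    by (induction n arbitrary: v) (auto intro: order_trans[OF contr])
  show "cinner ((Q ^^ n) x) y = cinner x ((Q ^^ n) y)"
  proof (induction n arbitrary: x y)
    case (Suc n)
    have "cinner ((Q ^^ Suc n) x) y = cinner ((Q ^^ n) x) (Q y)" by (simp add: Qsa)
    also have "\<dots> = cinner x ((Q ^^ n) (Q y))" by (rule Suc.IH)
    also have "(Q ^^ n) (Q y) = (Q ^^ Suc n) y" by (simp add: funpow_swap1)
    finally show ?case .
  qed simp
  show "P ((Q ^^ n) v) = (Q ^^ n) (P v)"
    by (induction n arbitrary: v) (auto simp: comm)
qed

lemma prod_contr:
  assumes P: "pos_op P" and Q: "bounded_op Q" and Qsa: "\<And>x y. cinner (Q x) y = cinner x (Q y)"
    and comm: "\<And>v. P (Q v) = Q (P v)" and contr: "\<And>v. norm (Q v) \<le> norm v"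
  shows "cmod (cinner v (P (Q v))) \<le> Re (cinner v (P v))"
proof -
  note fp = funpow_props[of Q P, OF Q Qsa comm contr]
  have bP: "bounded_op P" using P pos_bop by blast
  obtain KP where KP: "KP \<ge> 0" "\<And>x. norm (P x) \<le> KP * norm x" using bop_bound bP by blast
  define a where "a n = cmod (cinner v (P ((Q ^^ (2 ^ n)) v)))" for n
  define \<beta> where "\<beta> = Re (cinner v (P v))"
  define K where "K = KP * (norm v)\<^sup>2"
  have \<beta>0: "\<beta> \<ge> 0" using pos_Re[OF P] by (simp add: \<beta>_def)
  have a0: "a n \<ge> 0" for n by (simp add: a_def)
  have aK: "a n \<le> K" for n
  proof -
    have "a n \<le> norm v * norm (P ((Q ^^ (2 ^ n)) v))" unfolding a_def by (rule cinner_cauchy)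
    also have "\<dots> \<le> norm v * (KP * norm v)"
      using KP(2)[of "(Q ^^ (2 ^ n)) v"] fp(1)[of "2^n" v] KP(1)
      by (intro mult_left_mono) (auto intro: order_trans mult_left_mono)
    finally show ?thesis by (simp add: K_def power2_eq_square algebra_simps)
  qed
  have asq: "(a n)\<^sup>2 \<le> \<beta> * a (Suc n)" for n
  proof -
    define w where "w = (Q ^^ (2 ^ n)) v"
    have "(a n)\<^sup>2 \<le> Re (cinner v (P v)) * Re (cinner w (P w))"
      unfolding a_def w_def by (rule pos_cs[OF P])
    also have "cinner w (P w) = cinner v (P ((Q ^^ (2 ^ Suc n)) v))"
    proof -
      have "cinner w (P w) = cinner w ((Q ^^ (2 ^ n)) (P v))" by (simp add: w_def fp(3))
      also have "\<dots> = cinner ((Q ^^ (2 ^ n)) w) (P v)" by (simp add: fp(2))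
      also have "(Q ^^ (2 ^ n)) w = (Q ^^ (2 ^ Suc n)) v"
        by (simp add: w_def funpow_add[symmetric, THEN fun_cong, simplified comp_def] mult_2)
      also have "cinner ((Q ^^ (2 ^ Suc n)) v) (P v) = cinner v ((Q ^^ (2 ^ Suc n)) (P v))" by (simp add: fp(2))
      also have "\<dots> = cinner v (P ((Q ^^ (2 ^ Suc n)) v))" by (simp add: fp(3))
      finally show ?thesis .
    qed
    also have "Re (cinner v (P v)) * Re (cinner v (P ((Q ^^ (2 ^ Suc n)) v))) \<le> \<beta> * a (Suc n)"
      unfolding \<beta>_def a_def by (intro mult_left_mono complex_Re_le_cmod pos_Re[OF P])
    finally show ?thesis .
  qed
  define \<alpha> where "\<alpha> = a 0"
  have \<alpha>: "\<alpha> = cmod (cinner v (P (Q v)))" by (simp add: \<alpha>_def a_def)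
  have ind: "\<alpha> ^ (2 ^ n) \<le> \<beta> ^ (2 ^ n - 1) * a n" for n
  proof (induction n)
    case 0 then show ?case by (simp add: \<alpha>_def)
  next
    case (Suc n)
    have ge: "2 ^ n \<ge> (1::nat)" by simp
    have "\<alpha> ^ (2 ^ Suc n) = (\<alpha> ^ (2 ^ n))\<^sup>2" by (simp add: power_mult[symmetric] mult.commute)
    also have "\<dots> \<le> (\<beta> ^ (2 ^ n - 1) * a n)\<^sup>2"
      using Suc.IH by (intro power_mono) (simp_all add: \<alpha>_def a0)
    also have "\<dots> = \<beta> ^ ((2 ^ n - 1) * 2) * (a n)\<^sup>2" by (simp only: power_mult_distrib power_mult)
    also have "\<dots> \<le> \<beta> ^ ((2 ^ n - 1) * 2) * (\<beta> * a (Suc n))"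
      using asq[of n] \<beta>0 by (intro mult_left_mono) simp_all
    also have "\<dots> = \<beta> ^ ((2 ^ n - 1) * 2 + 1) * a (Suc n)" by (simp add: power_add mult.assoc)
    also have "(2 ^ n - 1) * 2 + 1 = (2 ^ Suc n - 1 :: nat)"
    proof -
      have "\<forall>m::nat. m \<ge> 1 \<longrightarrow> (m - 1) * 2 + 1 = 2 * m - 1" by presburger
      then show ?thesis using ge by simp
    qed
    finally show ?case .
  qed
  show ?thesis
  proof (rule ccontr)
    assume "\<not> ?thesis"
    then have gt: "\<alpha> > \<beta>" using \<alpha> \<beta>_def by simp
    show False
    proof (cases "\<beta> = 0")
      case True
      then have "\<alpha>\<^sup>2 \<le> 0" using asq[of 0] by (simp add: \<alpha>_def)
      then show False using gt True by simp
    next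
      case False
      then have bp: "\<beta> > 0" using \<beta>0 by simp
      define x where "x = \<alpha> / \<beta>"
      have x1: "x > 1" using gt bp by (simp add: x_def)
      obtain n where n: "K / \<beta> < x ^ n" using real_arch_pow[OF x1] by blast
      have xn: "x ^ n \<le> x ^ (2 ^ n)" using x1 by (intro power_increasing) (simp_all add: less_imp_le)
      have "\<alpha> ^ (2 ^ n) \<le> \<beta> ^ (2 ^ n - 1) * K"
        using ind[of n] aK[of n] bp by (meson order_trans mult_left_mono zero_le_power less_imp_le)
      moreover have "\<alpha> ^ (2 ^ n) = x ^ (2 ^ n) * \<beta> ^ (2 ^ n)" using bp by (simp add: x_def power_divide)
      moreover have "\<beta> ^ (2 ^ n) = \<beta> ^ (2 ^ n - 1) * \<beta>"
        by (simp add: power_Suc2[symmetric])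
      ultimately have "\<beta> ^ (2 ^ n - 1) * (x ^ (2 ^ n) * \<beta>) \<le> \<beta> ^ (2 ^ n - 1) * K"
        by (simp add: algebra_simps)
      then have "x ^ (2 ^ n) * \<beta> \<le> K" using bp by (simp add: mult_le_cancel_left)
      then have "x ^ (2 ^ n) \<le> K / \<beta>" using bp by (simp add: pos_le_divide_eq)
      then show False using n xn by linarith
    qed
  qed
qed

lemma prod_pos:
  assumes P: "pos_op P" and Q: "pos_op Q" and comm: "\<And>v. P (Q v) = Q (P v)" and c: "c > 0"
    and bd: "\<And>v. norm (Q v) \<le> c * norm v"
  shows "Im (cinner v (P (Q v))) = 0" "0 \<le> Re (cinner v (P (Q v)))"
    "Re (cinner v (P (Q v))) \<le> c * Re (cinner v (P v))"
proof -
  have bP: "bounded_op P" and bQ: "bounded_op Q" using P Q pos_bop by auto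
  define S where "S = (\<lambda>v. scaleC (complex_of_real (1 / c)) (Q v))"
  have bS: "bounded_op S" unfolding S_def by (intro bop_scal bQ)
  have Ssa: "cinner (S x) y = cinner x (S y)" for x y
    by (simp add: S_def cinner_scaleC_left cinner_scaleC_right pos_sa[OF Q])
  have Scontr: "norm (S x) \<le> norm x" for x
    unfolding S_def norm_scaleC norm_of_real using bd[of x] c by (simp add: divide_le_eq mult.commute)
  have PS: "P (S x) = S (P x)" for x by (simp add: S_def bop_scaleC[OF bP] comm)
  have PSv: "cinner v (P (S v)) = complex_of_real (1 / c) * cinner v (P (Q v))"
    by (simp add: S_def bop_scaleC[OF bP] cinner_scaleC_right)
  have up: "cmod (cinner v (P (S v))) \<le> Re (cinner v (P v))"
    by (rule prod_contr[OF P bS Ssa PS Scontr])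
  show "Re (cinner v (P (Q v))) \<le> c * Re (cinner v (P v))"
  proof -
    have "Re (cinner v (P (Q v))) \<le> cmod (cinner v (P (Q v)))" by (rule complex_Re_le_cmod)
    also have "\<dots> = c * cmod (cinner v (P (S v)))" unfolding PSv norm_mult norm_of_real using c by simp
    also have "\<dots> \<le> c * Re (cinner v (P v))" using up c by simp
    finally show ?thesis .
  qed
  have Spos: "pos_op S"
    unfolding pos_op_def using bS pos_Im[OF Q] pos_Re[OF Q] c
    by (simp add: S_def cinner_scaleC_right)
  have Ssq: "(norm (S x))\<^sup>2 \<le> Re (cinner x (S x))" for x
  proof -
    have "cmod (cinner x (S (S x))) \<le> Re (cinner x (S x))"
      by (rule prod_contr[OF Spos bS Ssa _ Scontr]) simp
    moreover have "cinner x (S (S x)) = complex_of_real ((norm (S x))\<^sup>2)"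
      by (simp add: Ssa[symmetric] cinner_self)
    ultimately show ?thesis by (simp add: norm_power)
  qed
  define R where "R = (\<lambda>v. v - S v)"
  have bR: "bounded_op R" unfolding R_def by (intro bop_minus_op bop_id' bS)
  have Rsa: "cinner (R x) y = cinner x (R y)" for x y
    by (simp add: R_def cinner_diff_left cinner_diff_right Ssa)
  have PR: "P (R x) = R (P x)" for x by (simp add: R_def bop_diff[OF bP] PS)
  have Rcontr: "norm (R x) \<le> norm x" for x
  proof -
    have "(norm (R x))\<^sup>2 = Re (cinner (x - S x) (x - S x))" by (simp add: R_def Re_cinner_self)
    also have "\<dots> = (norm x)\<^sup>2 - 2 * Re (cinner x (S x)) + (norm (S x))\<^sup>2"
    proof -
      have "Re (cinner (S x) x) = Re (cinner x (S x))" by (simp add: Ssa)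
      then show ?thesis by (simp add: cinner_diff_left cinner_diff_right Re_cinner_self)
    qed
    also have "\<dots> \<le> (norm x)\<^sup>2" using Ssq[of x] pos_Re[OF Spos, of x] by simp
    finally show ?thesis by (simp add: power_mono_iff)
  qed
  have "cmod (cinner v (P (R v))) \<le> Re (cinner v (P v))"
    by (rule prod_contr[OF P bR Rsa PR Rcontr])
  moreover have "cinner v (P (R v)) = cinner v (P v) - cinner v (P (S v))"
    by (simp add: R_def bop_diff[OF bP] cinner_diff_right)
  ultimately have "Re (cinner v (P v)) - Re (cinner v (P (S v))) \<le> Re (cinner v (P v))"
    using complex_Re_le_cmod[of "cinner v (P v) - cinner v (P (S v))"] by simp
  then have "0 \<le> Re (cinner v (P (S v)))" by simp
  then show "0 \<le> Re (cinner v (P (Q v)))" using c by (simp add: PSv zero_le_divide_iff)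
  have "cinner v (P (Q v)) = cinner (P v) (Q v)" by (simp add: pos_sa[OF P])
  also have "\<dots> = cinner (Q (P v)) v" by (simp add: pos_sa[OF Q])
  also have "\<dots> = cnj (cinner v (P (Q v)))" by (simp add: comm[symmetric] cinner_commute[of _ v])
  finally show "Im (cinner v (P (Q v))) = 0" by (simp add: complex_eq_iff)
qed

section \<open>Extensions from dense subspaces\<close>

lemma ext_add_bound:
  fixes L :: "'h::complex_hilbert \<Rightarrow> 'b::{real_normed_vector,complete_space}"
  assumes dense: "closure D = UNIV" and Dadd: "\<And>u v. u \<in> D \<Longrightarrow> v \<in> D \<Longrightarrow> u + v \<in> D"
    and Dneg: "\<And>u. u \<in> D \<Longrightarrow> - u \<in> D"
    and Ladd: "\<And>u v. u \<in> D \<Longrightarrow> v \<in> D \<Longrightarrow> L (u + v) = L u + L v"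
    and Lb: "\<And>u. u \<in> D \<Longrightarrow> norm (L u) \<le> K * norm u" and K: "K \<ge> 0"
  obtains F where "continuous_on UNIV F" "\<And>u. u \<in> D \<Longrightarrow> F u = L u"
    "\<And>x y. F (x + y) = F x + F y" "\<And>x. norm (F x) \<le> K * norm x"
proof -
  have Ldiff: "L (u - v) = L u - L v" if "u \<in> D" "v \<in> D" for u v
  proof -
    have "u - v \<in> D" using Dadd[OF that(1) Dneg[OF that(2)]] by simp
    then have "L (u - v) + L v = L u" using Ladd[of "u - v" v] that by simp
    then show ?thesis by (simp add: eq_diff_eq)
  qed
  have uc: "uniformly_continuous_on D L"
    unfolding uniformly_continuous_on_def
  proof (intro allI impI)
    fix e :: real assume e: "e > 0"
    have "dist (L x') (L x) < e" if "x \<in> D" "x' \<in> D" "dist x' x < e / (K + 1)" for x x'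
    proof -
      have "dist (L x') (L x) = norm (L (x' - x))" using that by (simp add: dist_norm Ldiff)
      also have "\<dots> \<le> K * norm (x' - x)" using Lb Dadd Dneg that by (metis diff_conv_add_uminus)
      also have "\<dots> \<le> (K + 1) * norm (x' - x)" by (simp add: mult_right_mono)
      also have "\<dots> < e" using that K by (simp add: dist_norm pos_less_divide_eq mult.commute)
      finally show ?thesis .
    qed
    moreover have "e / (K + 1) > 0" using e K by simp
    ultimately show "\<exists>d>0. \<forall>x\<in>D. \<forall>x'\<in>D. dist x' x < d \<longrightarrow> dist (L x') (L x) < e" by blast
  qed
  obtain g where g1: "uniformly_continuous_on (closure D) g" and g2: "\<And>x. x \<in> D \<Longrightarrow> L x = g x"
    using uniformly_continuous_on_extension_on_closure[OF uc] by metis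
  have gc: "continuous_on UNIV g" using g1 dense uniformly_continuous_imp_continuous by metis
  have shift: "continuous_on UNIV (\<lambda>x. g (x + y))" for y
    by (rule continuous_on_compose2[OF gc]) (auto intro!: continuous_intros)
  have add1: "g (x + y) = g x + g y" if "y \<in> D" for x y
    by (rule dense_eq[OF dense shift[of y]]) (auto intro!: continuous_intros gc simp: g2[symmetric] Ladd Dadd that)
  have add: "g (x + y) = g x + g y" for x y
    by (rule dense_eq[OF dense, of "\<lambda>y. g (x + y)" "\<lambda>y. g x + g y"])
       (auto intro!: continuous_intros gc continuous_on_compose2[OF gc] simp: add1)
  have bd: "norm (g x) \<le> K * norm x" for x
    by (rule dense_le[OF dense]) (auto intro!: continuous_intros continuous_on_compose2[OF gc] simp: g2[symmetric] Lb)
  show ?thesis using that[OF gc g2[symmetric] add bd] by simp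
qed

lemma bop_scaleC_cont: "continuous_on UNIV (\<lambda>v::'h::complex_hilbert. scaleC c v)"
  using bop_cont[OF bop_scal[OF bop_id', of c]] .

lemma ext_functional:
  fixes f :: "'h::complex_hilbert \<Rightarrow> complex"
  assumes dense: "closure D = UNIV" and Dadd: "\<And>u v. u \<in> D \<Longrightarrow> v \<in> D \<Longrightarrow> u + v \<in> D"
    and Dsc: "\<And>c u. u \<in> D \<Longrightarrow> scaleC c u \<in> D"
    and fadd: "\<And>u v. u \<in> D \<Longrightarrow> v \<in> D \<Longrightarrow> f (u + v) = f u + f v"
    and fsc: "\<And>c u. u \<in> D \<Longrightarrow> f (scaleC c u) = c * f u"
    and fb: "\<And>u. u \<in> D \<Longrightarrow> cmod (f u) \<le> K * norm u" and K: "K \<ge> 0"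
  shows "\<exists>w. (\<forall>u\<in>D. f u = cinner w u) \<and> norm w \<le> K"
proof -
  have Dneg: "- u \<in> D" if "u \<in> D" for u using Dsc[OF that, of "-1"] by (simp add: scaleC_minus1)
  obtain F where F: "continuous_on UNIV F" "\<And>u. u \<in> D \<Longrightarrow> F u = f u"
    "\<And>x y. F (x + y) = F x + F y" "\<And>x. norm (F x) \<le> K * norm x"
    using ext_add_bound[OF dense Dadd Dneg fadd fb K] by metis
  have Fsc: "F (scaleC c x) = c * F x" for c x
    by (rule dense_eq[OF dense, of "\<lambda>x. F (scaleC c x)" "\<lambda>x. c * F x"])
       (auto intro!: continuous_intros continuous_on_compose2[OF F(1) bop_scaleC_cont] simp: F(1) F(2) Dsc fsc)
  obtain w where w: "\<And>x. F x = cinner w x" using riesz[OF F(3) Fsc F(4)] by metis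
  have "norm w \<le> K"
    by (rule dense_norm_bound[of UNIV]) (use K w F(4) in auto)
  then show ?thesis using w F(2) by metis
qed

lemma ext_vec:
  fixes L :: "'h::complex_hilbert \<Rightarrow> 'h"
  assumes dense: "closure D = UNIV" and Dadd: "\<And>u v. u \<in> D \<Longrightarrow> v \<in> D \<Longrightarrow> u + v \<in> D"
    and Dsc: "\<And>c u. u \<in> D \<Longrightarrow> scaleC c u \<in> D"
    and Ladd: "\<And>u v. u \<in> D \<Longrightarrow> v \<in> D \<Longrightarrow> L (u + v) = L u + L v"
    and Lsc: "\<And>c u. u \<in> D \<Longrightarrow> L (scaleC c u) = scaleC c (L u)"
    and Lb: "\<And>u. u \<in> D \<Longrightarrow> norm (L u) \<le> K * norm u" and K: "K \<ge> 0"
  shows "\<exists>T. bounded_op T \<and> (\<forall>u\<in>D. T u = L u)"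
proof -
  have Dneg: "- u \<in> D" if "u \<in> D" for u using Dsc[OF that, of "-1"] by (simp add: scaleC_minus1)
  obtain F where F: "continuous_on UNIV F" "\<And>u. u \<in> D \<Longrightarrow> F u = L u"
    "\<And>x y. F (x + y) = F x + F y" "\<And>x. norm (F x) \<le> K * norm x"
    using ext_add_bound[OF dense Dadd Dneg Ladd Lb K] by metis
  have Fsc: "F (scaleC c x) = scaleC c (F x)" for c x
    by (rule dense_eq[OF dense, of "\<lambda>x. F (scaleC c x)" "\<lambda>x. scaleC c (F x)"])
       (auto intro!: continuous_intros continuous_on_compose2[OF F(1) bop_scaleC_cont]
         continuous_on_compose2[OF bop_scaleC_cont F(1)] simp: F(1) F(2) Dsc Lsc)
  have "bounded_op F" unfolding bounded_op_def using F(3) Fsc F(4) by blast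
  then show ?thesis using F(2) by blast
qed

lemma form_to_op:
  fixes g :: "'h::complex_hilbert \<Rightarrow> 'h \<Rightarrow> complex"
  assumes dense: "closure D = UNIV" and Dadd: "\<And>u v. u \<in> D \<Longrightarrow> v \<in> D \<Longrightarrow> u + v \<in> D"
    and Dsc: "\<And>c u. u \<in> D \<Longrightarrow> scaleC c u \<in> D"
    and g1: "\<And>u v w. u \<in> D \<Longrightarrow> v \<in> D \<Longrightarrow> w \<in> D \<Longrightarrow> g u (v + w) = g u v + g u w"
    and g2: "\<And>c u v. u \<in> D \<Longrightarrow> v \<in> D \<Longrightarrow> g u (scaleC c v) = c * g u v"
    and g3: "\<And>u v w. u \<in> D \<Longrightarrow> v \<in> D \<Longrightarrow> w \<in> D \<Longrightarrow> g (u + v) w = g u w + g v w"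
    and g4: "\<And>c u v. u \<in> D \<Longrightarrow> v \<in> D \<Longrightarrow> g (scaleC c u) v = cnj c * g u v"
    and gb: "\<And>u v. u \<in> D \<Longrightarrow> v \<in> D \<Longrightarrow> cmod (g u v) \<le> K * norm u * norm v" and K: "K \<ge> 0"
  shows "\<exists>T. bounded_op T \<and> (\<forall>u\<in>D. \<forall>v\<in>D. cinner (T u) v = g u v)"
proof -
  have "\<exists>w. (\<forall>v\<in>D. g u v = cinner w v) \<and> norm w \<le> K * norm u" if u: "u \<in> D" for u
    by (rule ext_functional[OF dense Dadd Dsc]) (use u g1 g2 gb K in \<open>auto\<close>)
  then obtain L where L: "\<And>u v. u \<in> D \<Longrightarrow> v \<in> D \<Longrightarrow> g u v = cinner (L u) v"
    and Lb: "\<And>u. u \<in> D \<Longrightarrow> norm (L u) \<le> K * norm u" by metis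
  have Ladd: "L (u + u') = L u + L u'" if "u \<in> D" "u' \<in> D" for u u'
    by (rule dense_vec_eq[OF dense]) (use that in \<open>simp add: L[symmetric] Dadd g3 cinner_add_left\<close>)
  have Lsc: "L (scaleC c u) = scaleC c (L u)" if "u \<in> D" for c u
    by (rule dense_vec_eq[OF dense]) (use that in \<open>simp add: L[symmetric] Dsc g4 cinner_scaleC_left\<close>)
  obtain T where "bounded_op T" "\<forall>u\<in>D. T u = L u" using ext_vec[OF dense Dadd Dsc Ladd Lsc Lb K] by blast
  then show ?thesis using L by metis
qed

lemma half_half: "scaleC (1/2) a + scaleC (1/2) a = a"
  by (simp add: scaleC_add_left[symmetric])

locale vna =
  fixes M :: "('h::complex_hilbert \<Rightarrow> 'h) set" and \<zeta> :: 'h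
  assumes vN: "von_neumann_algebra M"
    and cyclic: "closure {a \<zeta> | a. a \<in> M} = UNIV"
    and separating: "\<forall>a\<in>M. a \<zeta> = 0 \<longrightarrow> a = (\<lambda>v. 0)"
begin

abbreviation "Mc \<equiv> commutant M"
abbreviation "D \<equiv> {a \<zeta> | a. a \<in> M}"

lemma M_bop: "a \<in> M \<Longrightarrow> bounded_op a"
  using vN by (simp add: von_neumann_algebra_def)

lemma M_adj: "a \<in> M \<Longrightarrow> adj a \<in> M"
  using vN by (simp add: von_neumann_algebra_def)

lemma M_eq: "commutant Mc = M"
  using vN by (simp add: von_neumann_algebra_def)

lemma Mc_bop: "y \<in> Mc \<Longrightarrow> bounded_op y"
  by (rule comm_bop)

lemma Mc_all_bop: "\<forall>A\<in>Mc. bounded_op A" using Mc_bop by blast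
lemma M_all_bop: "\<forall>A\<in>M. bounded_op A" using M_bop by blast

lemma M_id: "(\<lambda>v. v) \<in> M" using comm_id[of Mc] M_eq by simp
lemma M_id2: "id \<in> M" using M_id by (simp add: id_def)

lemma M_plus: "a \<in> M \<Longrightarrow> b \<in> M \<Longrightarrow> (\<lambda>v. a v + b v) \<in> M"
  using comm_plus[OF Mc_all_bop, of a b] M_eq by simp
lemma M_scal: "a \<in> M \<Longrightarrow> (\<lambda>v. scaleC c (a v)) \<in> M"
  using comm_scal[OF Mc_all_bop, of a] M_eq by simp
lemma M_comp: "a \<in> M \<Longrightarrow> b \<in> M \<Longrightarrow> (\<lambda>v. a (b v)) \<in> M"
  using comm_comp'[of a Mc b] M_eq by simp
lemma M_minus: "a \<in> M \<Longrightarrow> b \<in> M \<Longrightarrow> (\<lambda>v. a v - b v) \<in> M"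
  using comm_minus[OF Mc_all_bop, of a b] M_eq by simp

lemma Mc_plus: "a \<in> Mc \<Longrightarrow> b \<in> Mc \<Longrightarrow> (\<lambda>v. a v + b v) \<in> Mc"
  using comm_plus[OF M_all_bop] by blast
lemma Mc_scal: "a \<in> Mc \<Longrightarrow> (\<lambda>v. scaleC c (a v)) \<in> Mc"
  using comm_scal[OF M_all_bop] by blast
lemma Mc_comp: "a \<in> Mc \<Longrightarrow> b \<in> Mc \<Longrightarrow> (a \<circ> b) \<in> Mc"
  using comm_comp by blast
lemma Mc_minus: "a \<in> Mc \<Longrightarrow> b \<in> Mc \<Longrightarrow> (\<lambda>v. a v - b v) \<in> Mc"
  using comm_minus[OF M_all_bop] by blast
lemma Mc_adj: "a \<in> Mc \<Longrightarrow> adj a \<in> Mc"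
  by (rule comm_adj) (use M_bop M_adj in auto)
lemma Mc_id: "(\<lambda>v. v) \<in> Mc" by (rule comm_id)

lemma comm: "a \<in> M \<Longrightarrow> y \<in> Mc \<Longrightarrow> a (y v) = y (a v)"
  by (rule comm_commute)

lemma dense: "closure D = UNIV" using cyclic .

lemma D_add: "u \<in> D \<Longrightarrow> v \<in> D \<Longrightarrow> u + v \<in> D"
  using M_plus by fastforce

lemma D_sc: "u \<in> D \<Longrightarrow> scaleC c u \<in> D"
  using M_scal by fastforce

lemma sep: assumes "a \<in> M" "b \<in> M" "a \<zeta> = b \<zeta>" shows "a = b"
proof -
  have "(\<lambda>v. a v - b v) = (\<lambda>v. 0)" using separating M_minus[OF assms(1,2)] assms(3) by auto
  then show ?thesis by (auto simp: fun_eq_iff dest: fun_cong)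
qed

lemma Mc_sep: assumes "T \<in> Mc" "T' \<in> Mc" "T \<zeta> = T' \<zeta>" shows "T = T'"
proof
  fix v
  show "T v = T' v"
  proof (rule dense_eq[OF dense bop_cont[OF Mc_bop[OF assms(1)]] bop_cont[OF Mc_bop[OF assms(2)]]])
    fix u assume "u \<in> D"
    then obtain a where a: "a \<in> M" "u = a \<zeta>" by blast
    show "T u = T' u" using comm[OF a(1) assms(1)] comm[OF a(1) assms(2)] assms(3) a(2) by metis
  qed
qed

lemma vec_eq: assumes "\<And>a. a \<in> M \<Longrightarrow> cinner w (a \<zeta>) = cinner w' (a \<zeta>)" shows "w = w'"
  by (rule dense_vec_eq[OF dense]) (use assms in blast)

lemma vstate_adj: "bounded_op X \<Longrightarrow> vstate \<zeta> (adj X \<circ> X) = complex_of_real ((norm (X \<zeta>))\<^sup>2)"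
  by (simp add: vstate_def adj_prop[symmetric] cinner_self)

lemma vstate_adj': "bounded_op X \<Longrightarrow> vstate \<zeta> (\<lambda>v. adj X (X v)) = complex_of_real ((norm (X \<zeta>))\<^sup>2)"
  by (simp add: vstate_def adj_prop[symmetric] cinner_self)

lemma pos_adj_comp: assumes "bounded_op a" shows "pos_op (\<lambda>v. adj a (a v))"
  unfolding pos_op_def
proof (intro conjI allI)
  show "bounded_op (\<lambda>v. adj a (a v))" using bop_comp[OF bop_adj[OF assms] assms] by (simp add: comp_def)
  fix v
  have "cinner v (adj a (a v)) = complex_of_real ((norm (a v))\<^sup>2)"
    by (simp add: adj_prop2[OF assms, symmetric] adj_prop[OF assms, symmetric] cinner_self)
  then show "Im (cinner v (adj a (a v))) = 0" "0 \<le> Re (cinner v (adj a (a v)))" by simp_all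
qed

end

locale tset = vna M \<zeta> for M :: "('h::complex_hilbert \<Rightarrow> 'h) set" and \<zeta> :: 'h +
  fixes \<tau> :: "('h \<Rightarrow> 'h) \<Rightarrow> ('h \<Rightarrow> 'h)"
  assumes Ph: "P_half \<zeta> M \<tau>"
begin

lemma t1: "a \<in> M \<Longrightarrow> \<tau> a \<in> M" using Ph by (simp add: P_half_def)
lemma t2: "a \<in> M \<Longrightarrow> b \<in> M \<Longrightarrow> \<tau> (\<lambda>v. a v + b v) = (\<lambda>v. \<tau> a v + \<tau> b v)" using Ph by (simp add: P_half_def)
lemma t3: "a \<in> M \<Longrightarrow> \<tau> (\<lambda>v. scaleC c (a v)) = (\<lambda>v. scaleC c (\<tau> a v))" using Ph by (simp add: P_half_def)
lemma t4: "a \<in> M \<Longrightarrow> pos_op a \<Longrightarrow> pos_op (\<tau> a)" using Ph by (simp add: P_half_def)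
lemma t5: "a \<in> M \<Longrightarrow> pos_op a \<Longrightarrow> Re (vstate \<zeta> (\<tau> a)) \<le> Re (vstate \<zeta> a)" using Ph by (simp add: P_half_def)
lemma t6: "op_le (\<tau> id) id" using Ph by (simp add: P_half_def)
lemma t7: "a \<in> M \<Longrightarrow> Re (vstate \<zeta> (adj (\<tau> a) \<circ> \<tau> a)) \<le> Re (vstate \<zeta> (adj a \<circ> a))" using Ph by (simp add: P_half_def)

lemma t_norm: assumes "a \<in> M" shows "norm (\<tau> a \<zeta>) \<le> norm (a \<zeta>)"
proof -
  have b1: "bounded_op (\<tau> a)" by (rule M_bop[OF t1[OF assms]])
  have b2: "bounded_op a" by (rule M_bop[OF assms])
  have "(norm (\<tau> a \<zeta>))\<^sup>2 \<le> (norm (a \<zeta>))\<^sup>2"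
    using t7[OF assms] unfolding vstate_adj[OF b1] vstate_adj[OF b2] by simp
  then show ?thesis by (rule power2_le_imp_le) simp
qed

definition r :: "('h \<Rightarrow> 'h) \<Rightarrow> ('h \<Rightarrow> 'h) \<Rightarrow> ('h \<Rightarrow> 'h) \<Rightarrow> complex" where
  "r y a b = cinner (y \<zeta>) (\<tau> (\<lambda>v. adj a (b v)) \<zeta>)"

lemma adjcomp_M: "a \<in> M \<Longrightarrow> b \<in> M \<Longrightarrow> (\<lambda>v. adj a (b v)) \<in> M"
  by (rule M_comp[OF M_adj])

lemma r_add_right: assumes "a \<in> M" "b \<in> M" "b' \<in> M"
  shows "r y a (\<lambda>v. b v + b' v) = r y a b + r y a b'"
proof -
  have "(\<lambda>v. adj a (b v + b' v)) = (\<lambda>v. adj a (b v) + adj a (b' v))"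
    by (simp add: bop_add[OF bop_adj[OF M_bop[OF assms(1)]]])
  then show ?thesis unfolding r_def using assms by (simp add: t2 adjcomp_M cinner_add_right)
qed

lemma r_scal_right: assumes "a \<in> M" "b \<in> M"
  shows "r y a (\<lambda>v. scaleC c (b v)) = c * r y a b"
proof -
  have "(\<lambda>v. adj a (scaleC c (b v))) = (\<lambda>v. scaleC c (adj a (b v)))"
    by (simp add: bop_scaleC[OF bop_adj[OF M_bop[OF assms(1)]]])
  then show ?thesis unfolding r_def using assms by (simp add: t3 adjcomp_M cinner_scaleC_right)
qed

lemma r_add_left: assumes "a \<in> M" "a' \<in> M" "b \<in> M"
  shows "r y (\<lambda>v. a v + a' v) b = r y a b + r y a' b"
  unfolding r_def using assms by (simp add: adj_plus M_bop t2 adjcomp_M cinner_add_right)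

lemma r_scal_left: assumes "a \<in> M" "b \<in> M"
  shows "r y (\<lambda>v. scaleC c (a v)) b = cnj c * r y a b"
proof -
  have "(\<lambda>v. adj (\<lambda>v. scaleC c (a v)) (b v)) = (\<lambda>v. scaleC (cnj c) (adj a (b v)))"
    by (simp add: adj_scal M_bop assms)
  then show ?thesis unfolding r_def using assms by (simp add: t3 adjcomp_M cinner_scaleC_right)
qed

lemma r_comp: assumes "x \<in> M" "a \<in> M" "b \<in> M"
  shows "r y (\<lambda>v. x (a v)) b = r y a (\<lambda>v. adj x (b v))"
  unfolding r_def using assms by (simp add: adj_comp_apply M_bop)

lemma r_id: "r y (\<lambda>v. v) x = cinner (y \<zeta>) (\<tau> x \<zeta>)"
  unfolding r_def by (simp add: adj_id')

lemma bound_pos: assumes "bounded_op y" obtains c where "c > 0" "\<And>v. norm (y v) \<le> c * norm v"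
proof -
  obtain K where K: "K \<ge> 0" "\<And>v. norm (y v) \<le> K * norm v" using bop_bound assms by blast
  have "norm (y v) \<le> (K + 1) * norm v" for v
  proof -
    have "norm (y v) \<le> K * norm v + norm v" using K(2)[of v] norm_ge_zero[of v] by linarith
    then show ?thesis by (simp add: algebra_simps)
  qed
  then show ?thesis using that[of "K + 1"] K(1) by simp
qed

lemma r_pos: assumes y: "pos_op y" "y \<in> Mc" and c: "c > 0" "\<And>v. norm (y v) \<le> c * norm v" and a: "a \<in> M"
  shows "Im (r y a a) = 0" "0 \<le> Re (r y a a)" "Re (r y a a) \<le> c * (norm (a \<zeta>))\<^sup>2"
proof -
  define P where "P = \<tau> (\<lambda>v. adj a (a v))"
  have PM: "P \<in> M" unfolding P_def by (rule t1[OF adjcomp_M[OF a a]])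
  have Ppos: "pos_op P" unfolding P_def by (rule t4[OF adjcomp_M[OF a a] pos_adj_comp[OF M_bop[OF a]]])
  have Pc: "P (y v) = y (P v)" for v by (rule comm[OF PM y(2)])
  have e: "r y a a = cinner \<zeta> (P (y \<zeta>))"
    unfolding r_def P_def[symmetric] by (simp add: pos_sa[OF y(1)] Pc)
  note pp = prod_pos[OF Ppos y(1) Pc c, of \<zeta>]
  show "Im (r y a a) = 0" "0 \<le> Re (r y a a)" using pp by (simp_all add: e)
  have "Re (cinner \<zeta> (P \<zeta>)) \<le> Re (vstate \<zeta> (\<lambda>v. adj a (a v)))"
    using t5[OF adjcomp_M[OF a a] pos_adj_comp[OF M_bop[OF a]]] by (simp add: P_def vstate_def)
  also have "\<dots> = (norm (a \<zeta>))\<^sup>2" by (simp add: vstate_adj' M_bop a)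
  finally have "c * Re (cinner \<zeta> (P \<zeta>)) \<le> c * (norm (a \<zeta>))\<^sup>2" using c(1) by simp
  then show "Re (r y a a) \<le> c * (norm (a \<zeta>))\<^sup>2" using pp(3) e by simp
qed

lemma r_cs: assumes y: "pos_op y" "y \<in> Mc" and c: "c > 0" "\<And>v. norm (y v) \<le> c * norm v"
  and a: "a \<in> M" and b: "b \<in> M"
  shows "cmod (r y a b) \<le> c * norm (a \<zeta>) * norm (b \<zeta>)"
proof -
  have hyp: "Im (r y a a + t * r y a b + cnj t * r y b a + cnj t * t * r y b b) = 0 \<and>
      0 \<le> Re (r y a a + t * r y a b + cnj t * r y b a + cnj t * t * r y b b)" for t
  proof -
    have tb: "(\<lambda>v. scaleC t (b v)) \<in> M" by (rule M_scal[OF b])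
    have ab: "(\<lambda>v. a v + scaleC t (b v)) \<in> M" by (rule M_plus[OF a tb])
    have "r y (\<lambda>v. a v + scaleC t (b v)) (\<lambda>v. a v + scaleC t (b v)) =
        r y a (\<lambda>v. a v + scaleC t (b v)) + cnj t * r y b (\<lambda>v. a v + scaleC t (b v))"
      by (simp only: r_add_left[OF a tb ab] r_scal_left[OF b ab])
    also have "\<dots> = (r y a a + t * r y a b) + cnj t * (r y b a + t * r y b b)"
      by (simp only: r_add_right[OF a a tb] r_add_right[OF b a tb] r_scal_right[OF a b] r_scal_right[OF b b])
    also have "\<dots> = r y a a + t * r y a b + cnj t * r y b a + cnj t * t * r y b b"
      by (simp add: distrib_left mult.assoc)
    finally have e: "r y (\<lambda>v. a v + scaleC t (b v)) (\<lambda>v. a v + scaleC t (b v)) =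
        r y a a + t * r y a b + cnj t * r y b a + cnj t * t * r y b b" .
    show ?thesis by (simp only: e[symmetric]) (use r_pos(1,2)[OF y c ab] in blast)
  qed
  have cs: "(cmod (r y a b))\<^sup>2 \<le> Re (r y a a) * Re (r y b b)"
    by (rule sesq_cs(2)[OF hyp r_pos(1)[OF y c b] r_pos(2)[OF y c b]])
  also have "\<dots> \<le> (c * (norm (a \<zeta>))\<^sup>2) * (c * (norm (b \<zeta>))\<^sup>2)"
    using r_pos[OF y c a] r_pos[OF y c b] by (intro mult_mono) auto
  also have "\<dots> = (c * norm (a \<zeta>) * norm (b \<zeta>))\<^sup>2" by (simp add: power2_eq_square algebra_simps)
  finally show ?thesis by (rule power2_le_imp_le) (use c in simp)
qed

end

context tset begin

definition dual :: "('h \<Rightarrow> 'h) \<Rightarrow> ('h \<Rightarrow> 'h) \<Rightarrow> bool" where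
  "dual T y \<longleftrightarrow> (\<forall>x\<in>M. cinner (T \<zeta>) (x \<zeta>) = cinner (y \<zeta>) (\<tau> x \<zeta>))"

lemma E: assumes y: "pos_op y" "y \<in> Mc"
  shows "\<exists>T\<in>Mc. dual T y \<and> (\<forall>a\<in>M. cinner (T (a \<zeta>)) (a \<zeta>) = r y a a)"
proof -
  obtain c where c: "c > 0" "\<And>v. norm (y v) \<le> c * norm v" using bound_pos[OF Mc_bop[OF y(2)]] by blast
  define inv where "inv u = (SOME a. a \<in> M \<and> a \<zeta> = u)" for u
  have inv: "inv (a \<zeta>) = a" if a: "a \<in> M" for a
  proof -
    have "\<exists>b. b \<in> M \<and> b \<zeta> = a \<zeta>" using a by blast
    then have "inv (a \<zeta>) \<in> M \<and> inv (a \<zeta>) \<zeta> = a \<zeta>" unfolding inv_def by (rule someI_ex)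
    then show ?thesis using a by (intro sep) auto
  qed
  define g where "g u v = r y (inv u) (inv v)" for u v
  have gD: "g (a \<zeta>) (b \<zeta>) = r y a b" if "a \<in> M" "b \<in> M" for a b
    using that by (simp add: g_def inv)
  have "\<exists>T. bounded_op T \<and> (\<forall>u\<in>D. \<forall>v\<in>D. cinner (T u) v = g u v)"
  proof (rule form_to_op[OF dense D_add D_sc])
    fix u v w assume "u \<in> D" "v \<in> D" "w \<in> D"
    then obtain a b b' where ab: "a \<in> M" "b \<in> M" "b' \<in> M" "u = a \<zeta>" "v = b \<zeta>" "w = b' \<zeta>" by blast
    have "g u (v + w) = g (a \<zeta>) ((\<lambda>x. b x + b' x) \<zeta>)" using ab by simp
    also have "\<dots> = r y a (\<lambda>x. b x + b' x)" by (rule gD[OF ab(1) M_plus[OF ab(2,3)]])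
    also have "\<dots> = r y a b + r y a b'" by (rule r_add_right[OF ab(1-3)])
    finally show "g u (v + w) = g u v + g u w" using ab gD by simp
    have "g (u + v) w = g ((\<lambda>x. a x + b x) \<zeta>) (b' \<zeta>)" using ab by simp
    also have "\<dots> = r y (\<lambda>x. a x + b x) b'" by (rule gD[OF M_plus[OF ab(1,2)] ab(3)])
    also have "\<dots> = r y a b' + r y b b'" by (rule r_add_left[OF ab(1-3)])
    finally show "g (u + v) w = g u w + g v w" using ab gD by simp
  next
    fix k u v assume "u \<in> D" "v \<in> D"
    then obtain a b where ab: "a \<in> M" "b \<in> M" "u = a \<zeta>" "v = b \<zeta>" by blast
    have "g u (scaleC k v) = g (a \<zeta>) ((\<lambda>x. scaleC k (b x)) \<zeta>)" using ab by simp
    also have "\<dots> = r y a (\<lambda>x. scaleC k (b x))" by (rule gD[OF ab(1) M_scal[OF ab(2)]])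
    also have "\<dots> = k * r y a b" by (rule r_scal_right[OF ab(1,2)])
    finally show "g u (scaleC k v) = k * g u v" using ab gD by simp
    have "g (scaleC k u) v = g ((\<lambda>x. scaleC k (a x)) \<zeta>) (b \<zeta>)" using ab by simp
    also have "\<dots> = r y (\<lambda>x. scaleC k (a x)) b" by (rule gD[OF M_scal[OF ab(1)] ab(2)])
    also have "\<dots> = cnj k * r y a b" by (rule r_scal_left[OF ab(1,2)])
    finally show "g (scaleC k u) v = cnj k * g u v" using ab gD by simp
  next
    fix u v assume "u \<in> D" "v \<in> D"
    then obtain a b where ab: "a \<in> M" "b \<in> M" "u = a \<zeta>" "v = b \<zeta>" by blast
    show "cmod (g u v) \<le> c * norm u * norm v"
      using ab r_cs[OF y c ab(1,2)] by (simp add: gD)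
  next
    show "0 \<le> c" using c by simp
  qed
  then obtain T where T: "bounded_op T" "\<And>u v. u \<in> D \<Longrightarrow> v \<in> D \<Longrightarrow> cinner (T u) v = g u v" by blast
  have TD: "cinner (T (a \<zeta>)) (b \<zeta>) = r y a b" if "a \<in> M" "b \<in> M" for a b
  proof -
    have mem: "a \<zeta> \<in> D" "b \<zeta> \<in> D" using that by blast+
    show ?thesis using T(2)[OF mem] gD[OF that] by simp
  qed
  have TMc: "T \<in> Mc"
  proof (rule commI[OF T(1)])
    fix x v assume x: "x \<in> M"
    have xb: "bounded_op x" by (rule M_bop[OF x])
    have onD: "x (T (a \<zeta>)) = T (x (a \<zeta>))" if a: "a \<in> M" for a
    proof (rule vec_eq)
      fix b assume b: "b \<in> M"
      have "cinner (x (T (a \<zeta>))) (b \<zeta>) = cinner (T (a \<zeta>)) ((\<lambda>v. adj x (b v)) \<zeta>)"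
        by (simp add: adj_prop[OF xb])
      also have "\<dots> = r y a (\<lambda>v. adj x (b v))" by (rule TD[OF a adjcomp_M[OF x b]])
      also have "\<dots> = r y (\<lambda>v. x (a v)) b" by (rule r_comp[OF x a b, symmetric])
      also have "\<dots> = cinner (T ((\<lambda>v. x (a v)) \<zeta>)) (b \<zeta>)" by (rule TD[OF M_comp[OF x a] b, symmetric])
      finally show "cinner (x (T (a \<zeta>))) (b \<zeta>) = cinner (T (x (a \<zeta>))) (b \<zeta>)" by simp
    qed
    have c1: "continuous_on UNIV (\<lambda>v. x (T v))" using bop_cont[OF bop_comp[OF xb T(1)]] by (simp add: comp_def)
    have c2: "continuous_on UNIV (\<lambda>v. T (x v))" using bop_cont[OF bop_comp[OF T(1) xb]] by (simp add: comp_def)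
    show "x (T v) = T (x v)"
      by (rule dense_eq[OF dense c1 c2]) (use onD in blast)
  qed
  have "dual T y"
    unfolding dual_def
  proof
    fix x assume x: "x \<in> M"
    have "cinner (T ((\<lambda>v. v) \<zeta>)) (x \<zeta>) = r y (\<lambda>v. v) x" by (rule TD[OF M_id x])
    then show "cinner (T \<zeta>) (x \<zeta>) = cinner (y \<zeta>) (\<tau> x \<zeta>)" by (simp add: r_id)
  qed
  moreover have "\<forall>a\<in>M. cinner (T (a \<zeta>)) (a \<zeta>) = r y a a" using TD by blast
  ultimately show ?thesis using TMc by blast
qed

definition good where "good y \<longleftrightarrow> (\<exists>T\<in>Mc. dual T y)"

lemma good_plus: assumes "good y1" "good y2" shows "good (\<lambda>v. y1 v + y2 v)"
proof -
  obtain T1 T2 where T: "T1 \<in> Mc" "T2 \<in> Mc" "dual T1 y1" "dual T2 y2" using assms good_def by metis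
  have "dual (\<lambda>v. T1 v + T2 v) (\<lambda>v. y1 v + y2 v)"
    using T(3,4) by (simp add: dual_def cinner_add_left)
  then show ?thesis unfolding good_def using Mc_plus[OF T(1,2)] by blast
qed

lemma good_scal: assumes "good y" shows "good (\<lambda>v. scaleC c (y v))"
proof -
  obtain T where T: "T \<in> Mc" "dual T y" using assms good_def by metis
  have "dual (\<lambda>v. scaleC c (T v)) (\<lambda>v. scaleC c (y v))"
    using T(2) by (simp add: dual_def cinner_scaleC_left)
  then show ?thesis unfolding good_def using Mc_scal[OF T(1)] by blast
qed

lemma good_pos: "pos_op y \<Longrightarrow> y \<in> Mc \<Longrightarrow> good y"
  using E unfolding good_def by blast

lemma good_sa: assumes y: "y \<in> Mc" and sa: "\<And>x z. cinner (y x) z = cinner x (y z)"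
  shows "good y"
proof -
  obtain K where K: "K \<ge> 0" "\<And>v. norm (y v) \<le> K * norm v" using bop_bound Mc_bop[OF y] by blast
  define q :: "'h \<Rightarrow> 'h" where "q = (\<lambda>v. scaleC (complex_of_real K) v)"
  define p :: "'h \<Rightarrow> 'h" where "p = (\<lambda>v. y v + q v)"
  have qMc: "q \<in> Mc" unfolding q_def using Mc_scal[OF Mc_id] by simp
  have pMc: "p \<in> Mc" unfolding p_def by (rule Mc_plus[OF y qMc])
  have qv: "cinner v (q v) = complex_of_real (K * (norm v)\<^sup>2)" for v
    by (simp add: q_def cinner_scaleC_right cinner_self)
  have qpos: "pos_op q" unfolding pos_op_def using Mc_bop[OF qMc] K(1) by (simp add: qv)
  have ppos: "pos_op p" unfolding pos_op_def
  proof (intro conjI allI)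
    show "bounded_op p" by (rule Mc_bop[OF pMc])
    fix v
    have im: "Im (cinner v (y v)) = 0"
      using sa[of v v] cinner_commute[of "y v" v] by (simp add: complex_eq_iff)
    have "cmod (cinner v (y v)) \<le> norm v * (K * norm v)"
    proof -
      have "norm v * norm (y v) \<le> norm v * (K * norm v)" using K(2)[of v] by (simp add: mult_left_mono)
      then show ?thesis using cinner_cauchy[of v "y v"] by linarith
    qed
    then have "- (K * (norm v)\<^sup>2) \<le> Re (cinner v (y v))"
      using abs_Re_le_cmod[of "cinner v (y v)"] by (simp add: power2_eq_square algebra_simps)
    then show "Im (cinner v (p v)) = 0" "0 \<le> Re (cinner v (p v))"
      using im by (simp_all add: p_def cinner_add_right qv)
  qed
  have "y = (\<lambda>v. p v + scaleC (-1) (q v))" by (simp add: p_def scaleC_minus1)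
  then show ?thesis using good_plus[OF good_pos[OF ppos pMc] good_scal[OF good_pos[OF qpos qMc]]] by simp
qed

lemma good_all: assumes y: "y \<in> Mc" shows "good y"
proof -
  have yb: "bounded_op y" by (rule Mc_bop[OF y])
  define h1 where "h1 = (\<lambda>v. y v + adj y v)"
  define h2 where "h2 = (\<lambda>v. scaleC \<i> (y v - adj y v))"
  have h1M: "h1 \<in> Mc" unfolding h1_def by (rule Mc_plus[OF y Mc_adj[OF y]])
  have h2M: "h2 \<in> Mc" unfolding h2_def by (rule Mc_scal[OF Mc_minus[OF y Mc_adj[OF y]]])
  have aa: "adj (adj y) = y" by (rule adj_adj[OF yb])
  have sa1: "cinner (h1 x) z = cinner x (h1 z)" for x z
    using adj_prop[OF bop_adj[OF yb], of x z] by (simp add: h1_def cinner_add_left cinner_add_right adj_prop[OF yb] aa add.commute)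
  have sa2: "cinner (h2 x) z = cinner x (h2 z)" for x z
    using adj_prop[OF bop_adj[OF yb], of x z]
    by (simp add: h2_def cinner_scaleC_left cinner_scaleC_right cinner_diff_left cinner_diff_right adj_prop[OF yb] aa algebra_simps)
  have "y = (\<lambda>v. scaleC (1/2) (h1 v) + scaleC (- \<i> / 2) (h2 v))"
  proof
    fix v
    have "scaleC (1/2) (h1 v) + scaleC (- \<i> / 2) (h2 v) =
        (scaleC (1/2) (y v) + scaleC (1/2) (y v)) + (scaleC (1/2) (adj y v) - scaleC (1/2) (adj y v))"
      by (simp add: h1_def h2_def scaleC_add_right scaleC_diff_right scaleC_scaleC)
    then show "y v = scaleC (1/2) (h1 v) + scaleC (- \<i> / 2) (h2 v)" by (simp add: half_half)
  qed
  then show ?thesis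
    using good_plus[OF good_scal[OF good_sa[OF h1M sa1]] good_scal[OF good_sa[OF h2M sa2]]] by simp
qed

definition tp :: "('h \<Rightarrow> 'h) \<Rightarrow> ('h \<Rightarrow> 'h)" where
  "tp y = (SOME T. T \<in> Mc \<and> dual T y)"

lemma tp: assumes "y \<in> Mc" shows "tp y \<in> Mc" "dual (tp y) y"
proof -
  have "\<exists>T. T \<in> Mc \<and> dual T y" using good_all[OF assms] good_def by blast
  then have "tp y \<in> Mc \<and> dual (tp y) y" unfolding tp_def by (rule someI_ex)
  then show "tp y \<in> Mc" "dual (tp y) y" by auto
qed

lemma dual_unique: assumes "T \<in> Mc" "T' \<in> Mc" "dual T y" "dual T' y" shows "T = T'"
proof (rule Mc_sep[OF assms(1,2)])
  show "T \<zeta> = T' \<zeta>" by (rule vec_eq) (use assms(3,4) in \<open>simp add: dual_def\<close>)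
qed

lemma tp_eq: "y \<in> Mc \<Longrightarrow> T \<in> Mc \<Longrightarrow> dual T y \<Longrightarrow> tp y = T"
  using dual_unique tp by blast

end

context tset begin

lemma tp_pos: assumes y: "pos_op y" "y \<in> Mc"
  shows "pos_op (tp y)" "\<And>a. a \<in> M \<Longrightarrow> cinner (tp y (a \<zeta>)) (a \<zeta>) = r y a a"
proof -
  obtain T where T: "T \<in> Mc" "dual T y" "\<And>a. a \<in> M \<Longrightarrow> cinner (T (a \<zeta>)) (a \<zeta>) = r y a a"
    using E[OF y] by blast
  have tpT: "tp y = T" by (rule tp_eq[OF y(2) T(1,2)])
  show "cinner (tp y (a \<zeta>)) (a \<zeta>) = r y a a" if "a \<in> M" for a using T(3)[OF that] tpT by simp
  obtain c where c: "c > 0" "\<And>v. norm (y v) \<le> c * norm v" using bound_pos[OF Mc_bop[OF y(2)]] by blast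
  have Tb: "bounded_op T" by (rule Mc_bop[OF T(1)])
  have onD: "cinner (a \<zeta>) (T (a \<zeta>)) = cnj (r y a a)" if "a \<in> M" for a
    using T(3)[OF that] cinner_commute[of "a \<zeta>" "T (a \<zeta>)"] by simp
  have cT: "continuous_on UNIV (\<lambda>u. cinner u (T u))"
    by (rule cinner_cont_both[OF continuous_on_id bop_cont[OF Tb]])
  have im: "Im (cinner u (T u)) = 0" for u
    by (rule dense_eq[OF dense, of "\<lambda>u. Im (cinner u (T u))" "\<lambda>u. 0"])
       (auto intro!: continuous_intros cT simp: onD r_pos(1)[OF y c])
  have re: "0 \<le> Re (cinner u (T u))" for u
    by (rule dense_le[OF dense, of "\<lambda>u. 0" "\<lambda>u. Re (cinner u (T u))"])
       (auto intro!: continuous_intros cT simp: onD r_pos(2)[OF y c])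
  show "pos_op (tp y)" unfolding tpT pos_op_def using Tb im re by blast
qed

lemma id_lam: "id = (\<lambda>v. v)" by (simp add: id_def)

lemma P_half_tp: "P_half \<zeta> Mc tp"
  unfolding P_half_def
proof (intro conjI ballI allI impI)
  fix a assume a: "a \<in> Mc"
  show "tp a \<in> Mc" by (rule tp(1)[OF a])
  fix b assume b: "b \<in> Mc"
  show "tp (\<lambda>v. a v + b v) = (\<lambda>v. tp a v + tp b v)"
  proof (rule tp_eq[OF Mc_plus[OF a b] Mc_plus[OF tp(1)[OF a] tp(1)[OF b]]])
    show "dual (\<lambda>v. tp a v + tp b v) (\<lambda>v. a v + b v)"
      using tp(2)[OF a] tp(2)[OF b] by (simp add: dual_def cinner_add_left)
  qed
next
  fix a c assume a: "a \<in> Mc"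
  show "tp (\<lambda>v. scaleC c (a v)) = (\<lambda>v. scaleC c (tp a v))"
  proof (rule tp_eq[OF Mc_scal[OF a] Mc_scal[OF tp(1)[OF a]]])
    show "dual (\<lambda>v. scaleC c (tp a v)) (\<lambda>v. scaleC c (a v))"
      using tp(2)[OF a] by (simp add: dual_def cinner_scaleC_left)
  qed
next
  fix y assume y: "y \<in> Mc" and yp: "pos_op y"
  show "pos_op (tp y)" by (rule tp_pos(1)[OF yp y])
next
  fix y assume y: "y \<in> Mc" and yp: "pos_op y"
  obtain c where c: "c > 0" "\<And>v. norm (y v) \<le> c * norm v" using bound_pos[OF Mc_bop[OF y]] by blast
  define P where "P = (\<lambda>v. v - \<tau> (\<lambda>x. x) v)"
  have PM: "P \<in> M" unfolding P_def by (rule M_minus[OF M_id t1[OF M_id]])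
  have Ppos: "pos_op P" using t6 unfolding op_le_def P_def id_lam .
  have Pc: "P (y v) = y (P v)" for v by (rule comm[OF PM y])
  have "0 \<le> Re (cinner \<zeta> (P (y \<zeta>)))" by (rule prod_pos(2)[OF Ppos yp Pc c])
  also have "cinner \<zeta> (P (y \<zeta>)) = cinner (y \<zeta>) \<zeta> - cinner (y \<zeta>) (\<tau> (\<lambda>x. x) \<zeta>)"
  proof -
    have A: "\<tau> (\<lambda>x. x) (y \<zeta>) = y (\<tau> (\<lambda>x. x) \<zeta>)" by (rule comm[OF t1[OF M_id] y])
    show ?thesis by (simp add: P_def cinner_diff_right A pos_sa[OF yp, symmetric])
  qed
  also have "cinner (y \<zeta>) (\<tau> (\<lambda>x. x) \<zeta>) = cinner (tp y \<zeta>) ((\<lambda>x. x) \<zeta>)"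
    using bspec[OF tp(2)[OF y, unfolded dual_def] M_id] by simp
  finally have "Re (cinner (tp y \<zeta>) \<zeta>) \<le> Re (cinner (y \<zeta>) \<zeta>)" by simp
  then show "Re (vstate \<zeta> (tp y)) \<le> Re (vstate \<zeta> y)"
    unfolding vstate_def using cinner_commute[of \<zeta> "tp y \<zeta>"] cinner_commute[of \<zeta> "y \<zeta>"] by simp
next
  have idMc: "(\<lambda>v. v) \<in> Mc" by (rule Mc_id)
  have idpos: "pos_op (\<lambda>v::'h. v)" unfolding pos_op_def using bop_id' by (simp add: cinner_self)
  have c1: "\<And>v::'h. norm v \<le> 1 * norm v" by simp
  define T where "T = tp (\<lambda>v. v)"
  have Tb: "bounded_op T" unfolding T_def by (rule Mc_bop[OF tp(1)[OF idMc]])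
  have Td: "cinner (T (a \<zeta>)) (a \<zeta>) = r (\<lambda>v. v) a a" if "a \<in> M" for a
    unfolding T_def by (rule tp_pos(2)[OF idpos idMc that])
  define Q where "Q = (\<lambda>v. v - T v)"
  have Qb: "bounded_op Q" unfolding Q_def by (rule bop_minus_op[OF bop_id' Tb])
  have onD: "cinner (a \<zeta>) (Q (a \<zeta>)) = complex_of_real ((norm (a \<zeta>))\<^sup>2) - cnj (r (\<lambda>v. v) a a)" if "a \<in> M" for a
    using Td[OF that] cinner_commute[of "a \<zeta>" "T (a \<zeta>)"] by (simp add: Q_def cinner_diff_right cinner_self)
  have cQ: "continuous_on UNIV (\<lambda>u. cinner u (Q u))"
    by (rule cinner_cont_both[OF continuous_on_id bop_cont[OF Qb]])
  note rp = r_pos[OF idpos idMc zero_less_one c1]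
  have im: "Im (cinner u (Q u)) = 0" for u
    by (rule dense_eq[OF dense, of "\<lambda>u. Im (cinner u (Q u))" "\<lambda>u. 0"])
       (auto intro!: continuous_intros cQ simp: onD rp(1))
  have re: "0 \<le> Re (cinner u (Q u))" for u
    by (rule dense_le[OF dense, of "\<lambda>u. 0" "\<lambda>u. Re (cinner u (Q u))"])
       (auto intro!: continuous_intros cQ simp: onD rp(3)[simplified])
  have "pos_op Q" unfolding pos_op_def using Qb im re by blast
  then show "op_le (tp id) id" unfolding op_le_def id_lam Q_def T_def by simp
next
  fix a assume a: "a \<in> Mc"
  have ab: "bounded_op a" by (rule Mc_bop[OF a])
  have Tb: "bounded_op (tp a)" by (rule Mc_bop[OF tp(1)[OF a]])
  have "norm (tp a \<zeta>) \<le> norm (a \<zeta>)"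
  proof (rule dense_norm_bound[OF dense])
    fix v assume "v \<in> D"
    then obtain x where x: "x \<in> M" "v = x \<zeta>" by blast
    have "cmod (cinner (tp a \<zeta>) (x \<zeta>)) = cmod (cinner (a \<zeta>) (\<tau> x \<zeta>))"
      using tp(2)[OF a] x by (simp add: dual_def)
    also have "\<dots> \<le> norm (a \<zeta>) * norm (\<tau> x \<zeta>)" by (rule cinner_cauchy)
    also have "\<dots> \<le> norm (a \<zeta>) * norm (x \<zeta>)" by (rule mult_left_mono[OF t_norm[OF x(1)] norm_ge_zero])
    finally show "cmod (cinner (tp a \<zeta>) v) \<le> norm (a \<zeta>) * norm v" using x by simp
  qed simp
  then have "(norm (tp a \<zeta>))\<^sup>2 \<le> (norm (a \<zeta>))\<^sup>2" by (simp add: power_mono)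
  then show "Re (vstate \<zeta> (adj (tp a) \<circ> tp a)) \<le> Re (vstate \<zeta> (adj a \<circ> a))"
    by (simp add: vstate_adj[OF Tb] vstate_adj[OF ab])
qed

end

context vna begin

lemma second_part:
  assumes t1: "\<And>x. x \<in> M \<Longrightarrow> \<tau>1 x \<in> M" and t2: "\<And>x. x \<in> M \<Longrightarrow> \<tau>2 x \<in> M"
    and d1: "\<forall>x\<in>M. \<forall>y\<in>Mc. cinner (\<tau>1' y \<zeta>) (x \<zeta>) = cinner (y \<zeta>) (\<tau>1 x \<zeta>)"
    and d2: "\<forall>x\<in>M. \<forall>y\<in>Mc. cinner (\<tau>2' y \<zeta>) (x \<zeta>) = cinner (y \<zeta>) (\<tau>2 x \<zeta>)"
    and unit: "norm \<zeta> = 1"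
    and x: "x \<in> M" and y1: "y1 \<in> Mc" and y2: "y2 \<in> Mc"
  shows "norm (cinner (y1 \<zeta>) (\<tau>1 x (y2 \<zeta>) - \<tau>2 x (y2 \<zeta>)))
                   \<le> norm (\<tau>1' (adj y2 \<circ> y1) \<zeta> - \<tau>2' (adj y2 \<circ> y1) \<zeta>) * norm (x \<zeta>)
               \<and> norm (\<tau>1' (adj y2 \<circ> y1) \<zeta> - \<tau>2' (adj y2 \<circ> y1) \<zeta>) * norm (x \<zeta>)
                   \<le> norm (\<tau>1' (adj y2 \<circ> y1) \<zeta> - \<tau>2' (adj y2 \<circ> y1) \<zeta>) * onorm x"
proof
  define w where "w = adj y2 \<circ> y1"
  have wM: "w \<in> Mc" unfolding w_def by (rule Mc_comp[OF Mc_adj[OF y2] y1])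
  have y2b: "bounded_op y2" by (rule Mc_bop[OF y2])
  have "cinner (y1 \<zeta>) (\<tau>1 x (y2 \<zeta>) - \<tau>2 x (y2 \<zeta>)) = cinner (y1 \<zeta>) (y2 (\<tau>1 x \<zeta> - \<tau>2 x \<zeta>))"
    using comm[OF t1[OF x] y2] comm[OF t2[OF x] y2] by (simp add: bop_diff[OF y2b])
  also have "\<dots> = cinner (w \<zeta>) (\<tau>1 x \<zeta> - \<tau>2 x \<zeta>)" by (simp add: w_def adj_prop2[OF y2b])
  also have "\<dots> = cinner (\<tau>1' w \<zeta> - \<tau>2' w \<zeta>) (x \<zeta>)"
    using d1 d2 x wM by (simp add: cinner_diff_right cinner_diff_left)
  finally have e: "cinner (y1 \<zeta>) (\<tau>1 x (y2 \<zeta>) - \<tau>2 x (y2 \<zeta>)) = cinner (\<tau>1' w \<zeta> - \<tau>2' w \<zeta>) (x \<zeta>)" .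
  show "norm (cinner (y1 \<zeta>) (\<tau>1 x (y2 \<zeta>) - \<tau>2 x (y2 \<zeta>)))
                   \<le> norm (\<tau>1' (adj y2 \<circ> y1) \<zeta> - \<tau>2' (adj y2 \<circ> y1) \<zeta>) * norm (x \<zeta>)"
    unfolding e w_def[symmetric] by (rule cinner_cauchy)
  have "norm (x \<zeta>) \<le> onorm x * norm \<zeta>" by (rule onorm[OF bop_bounded_linear[OF M_bop[OF x]]])
  then have "norm (x \<zeta>) \<le> onorm x" using unit by simp
  then show "norm (\<tau>1' (adj y2 \<circ> y1) \<zeta> - \<tau>2' (adj y2 \<circ> y1) \<zeta>) * norm (x \<zeta>)
                   \<le> norm (\<tau>1' (adj y2 \<circ> y1) \<zeta> - \<tau>2' (adj y2 \<circ> y1) \<zeta>) * onorm x"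
    by (rule mult_left_mono) simp
qed

end

theorem lemma2p1:
  fixes M :: "('h::complex_hilbert \<Rightarrow> 'h) set" and \<zeta> :: 'h
  assumes vN: "von_neumann_algebra M"
    and unit: "norm \<zeta> = 1"
    and cyclic: "closure {a \<zeta> | a. a \<in> M} = UNIV"
    and separating: "\<forall>a\<in>M. a \<zeta> = 0 \<longrightarrow> a = (\<lambda>v. 0)"
  shows "(\<forall>\<tau>. P_half \<zeta> M \<tau> \<longrightarrow>
            (\<exists>\<tau>'. P_half \<zeta> (commutant M) \<tau>' \<and>
               (\<forall>x\<in>M. \<forall>y\<in>commutant M. cinner (\<tau>' y \<zeta>) (x \<zeta>) = cinner (y \<zeta>) (\<tau> x \<zeta>))))
       \<and> (\<forall>\<tau>1 \<tau>2 \<tau>1' \<tau>2'. P_half \<zeta> M \<tau>1 \<and> P_half \<zeta> M \<tau>2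
            \<and> P_half \<zeta> (commutant M) \<tau>1' \<and> P_half \<zeta> (commutant M) \<tau>2'
            \<and> (\<forall>x\<in>M. \<forall>y\<in>commutant M. cinner (\<tau>1' y \<zeta>) (x \<zeta>) = cinner (y \<zeta>) (\<tau>1 x \<zeta>))
            \<and> (\<forall>x\<in>M. \<forall>y\<in>commutant M. cinner (\<tau>2' y \<zeta>) (x \<zeta>) = cinner (y \<zeta>) (\<tau>2 x \<zeta>))
          \<longrightarrow> (\<forall>x\<in>M. \<forall>y1\<in>commutant M. \<forall>y2\<in>commutant M.
                 norm (cinner (y1 \<zeta>) (\<tau>1 x (y2 \<zeta>) - \<tau>2 x (y2 \<zeta>)))
                   \<le> norm (\<tau>1' (adj y2 \<circ> y1) \<zeta> - \<tau>2' (adj y2 \<circ> y1) \<zeta>) * norm (x \<zeta>)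
               \<and> norm (\<tau>1' (adj y2 \<circ> y1) \<zeta> - \<tau>2' (adj y2 \<circ> y1) \<zeta>) * norm (x \<zeta>)
                   \<le> norm (\<tau>1' (adj y2 \<circ> y1) \<zeta> - \<tau>2' (adj y2 \<circ> y1) \<zeta>) * onorm x))"
proof (intro conjI allI impI ballI)
  interpret V: vna M \<zeta> using vN cyclic separating by unfold_locales
  {
    fix \<tau> assume Ph: "P_half \<zeta> M \<tau>"
    interpret T: tset M \<zeta> \<tau> using Ph by unfold_locales
    show "\<exists>\<tau>'. P_half \<zeta> (commutant M) \<tau>' \<and>
               (\<forall>x\<in>M. \<forall>y\<in>commutant M. cinner (\<tau>' y \<zeta>) (x \<zeta>) = cinner (y \<zeta>) (\<tau> x \<zeta>))"
      using T.P_half_tp T.tp(2) unfolding T.dual_def by blast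
  }
  fix \<tau>1 \<tau>2 \<tau>1' \<tau>2' x y1 y2
  assume H: "P_half \<zeta> M \<tau>1 \<and> P_half \<zeta> M \<tau>2
            \<and> P_half \<zeta> (commutant M) \<tau>1' \<and> P_half \<zeta> (commutant M) \<tau>2'
            \<and> (\<forall>x\<in>M. \<forall>y\<in>commutant M. cinner (\<tau>1' y \<zeta>) (x \<zeta>) = cinner (y \<zeta>) (\<tau>1 x \<zeta>))
            \<and> (\<forall>x\<in>M. \<forall>y\<in>commutant M. cinner (\<tau>2' y \<zeta>) (x \<zeta>) = cinner (y \<zeta>) (\<tau>2 x \<zeta>))"
    and x: "x \<in> M" and y1: "y1 \<in> commutant M" and y2: "y2 \<in> commutant M"
  have t1: "\<And>x. x \<in> M \<Longrightarrow> \<tau>1 x \<in> M" and t2: "\<And>x. x \<in> M \<Longrightarrow> \<tau>2 x \<in> M"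
    using H by (simp_all add: P_half_def)
  have d1: "\<forall>x\<in>M. \<forall>y\<in>commutant M. cinner (\<tau>1' y \<zeta>) (x \<zeta>) = cinner (y \<zeta>) (\<tau>1 x \<zeta>)"
    and d2: "\<forall>x\<in>M. \<forall>y\<in>commutant M. cinner (\<tau>2' y \<zeta>) (x \<zeta>) = cinner (y \<zeta>) (\<tau>2 x \<zeta>)"
    using H by blast+
  note sp = V.second_part[of \<tau>1 \<tau>2 \<tau>1' \<tau>2' x y1 y2, OF t1 t2 d1 d2 unit x y1 y2]
  show "norm (cinner (y1 \<zeta>) (\<tau>1 x (y2 \<zeta>) - \<tau>2 x (y2 \<zeta>)))
                   \<le> norm (\<tau>1' (adj y2 \<circ> y1) \<zeta> - \<tau>2' (adj y2 \<circ> y1) \<zeta>) * norm (x \<zeta>)"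
    using sp by blast
  show "norm (\<tau>1' (adj y2 \<circ> y1) \<zeta> - \<tau>2' (adj y2 \<circ> y1) \<zeta>) * norm (x \<zeta>)
                   \<le> norm (\<tau>1' (adj y2 \<circ> y1) \<zeta> - \<tau>2' (adj y2 \<circ> y1) \<zeta>) * onorm x"
    using sp by blast
qed

end
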